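(* For every fixed integer $r\ge 2$, \[ \frac{z_{\mathcal{R}^{(r)}}(\mathbb{RM}^{(r)}_{n})}{n}\longrightarrow \frac{(r-1)!}{r^{r-1}}\quad\text{in probability as } n\to\infty . \] Equivalently, the size of a largest $r$-partite sub-matching of $\mathbb{RM}^{(r)}_{n}$ is asymptotic (in probability) to $\frac{(r-1)!}{r^{r-1}}n$.
   Context: An ordered $r$-matching of size $n$ is a set of $n$ pairwise disjoint $r$-element subsets (edges) of a linearly ordered vertex set of size $rn$, with no other vertices; $\mathcal{M}^{(r)}_n$ denotes the set of all ordered $r$-matchings on $[rn]$, and $\mathbb{RM}^{(r)}_n$ denotes a matching chosen uniformly at random from $\mathcal{M}^{(r)}_n$. An ordered matching can be written as a word: each edge gets a letter, and each vertex is replaced by the letter of its edge. An $r$-pattern is an ordered $r$-matching of size 2, written as a word over $\{A,B\}$ with each letter appearing $r$ times and beginning with $A$. Two disjoint edges $e,f$ of an ordered matching form the pattern $P$ if the matching $\{e,f\}$ (with the induced order) is order-isomorphic to $P$. For a set $\mathcal{P}$ of $r$-patterns, a $\mathcal{P}$-clique is an ordered $r$-matching in which every pair of edges forms a pattern belonging to $\mathcal{P}$; $z_{\mathcal{P}}(M)$ is the largest size of a $\mathcal{P}$-clique contained in $M$ (as a sub-matching). An $r$-pattern is $r$-partite if it is of the form $S_1S_2\cdots S_r$ with each $S_i\in\{AB,BA\}$ (and $S_1=AB$); $\mathcal{R}^{(r)}$ denotes the set of all $2^{r-1}$ $r$-partite $r$-patterns. An ordered $r$-matching of size $m$ is $r$-partite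 if each edge contains exactly one vertex from each of the $r$ consecutive blocks of $m$ vertices. *)

theory Defs
  imports "HOL-Probability.Probability"
begin

text \<open>Ordered r-matchings of size n on the linearly ordered vertex set {0..<r*n}
  (order-isomorphic to [rn]). Edges are r-element vertex sets.\<close>
definition ordered_matching :: "nat \<Rightarrow> nat \<Rightarrow> nat set set \<Rightarrow> bool" where
  "ordered_matching r n M \<longleftrightarrow>
     card M = n \<and> (\<forall>e\<in>M. card e = r) \<and> pairwise disjnt M \<and> \<Union>M = {0..<r*n}"

definition matchings :: "nat \<Rightarrow> nat \<Rightarrow> nat set set set" where
  "matchings r n = {M. ordered_matching r n M}"

text \<open>Word of the 2-edge matching {e,f}: list the vertices of e \<union> f in increasing
  order and write True (letter A) for vertices of the edge containing the smallest
  vertex, False (letter B) for the other edge. Two disjoint edges form pattern P iff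
  their word is P.\<close>
definition pattern_word :: "nat set \<Rightarrow> nat set \<Rightarrow> bool list" where
  "pattern_word e f =
     (let a = (if Min (e \<union> f) \<in> e then e else f)
      in map (\<lambda>x. x \<in> a) (sorted_list_of_set (e \<union> f)))"

text \<open>r-partite r-patterns: words S_1 ... S_r with each S_i \<in> {AB, BA} and S_1 = AB.\<close>
definition rpartite_patterns :: "nat \<Rightarrow> bool list set" where
  "rpartite_patterns r = {w. length w = 2*r \<and> (\<forall>i<r. w!(2*i) \<noteq> w!(2*i+1)) \<and> w!0 = True}"

definition is_clique :: "bool list set \<Rightarrow> nat set set \<Rightarrow> bool" where
  "is_clique P C \<longleftrightarrow> (\<forall>e\<in>C. \<forall>f\<in>C. e \<noteq> f \<longrightarrow> pattern_word e f \<in> P)"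

definition z :: "bool list set \<Rightarrow> nat set set \<Rightarrow> nat" where
  "z P M = Max (card ` {C. C \<subseteq> M \<and> is_clique P C})"

end

theory Submission
  imports Defs
begin

abbreviation sl :: "nat set \<Rightarrow> nat list" where "sl A \<equiv> sorted_list_of_set A"

lemma sl_less_iff:
  assumes "finite A" "i < card A" "j < card A"
  shows "sl A ! i < sl A ! j \<longleftrightarrow> i < j"
proof -
  have s: "sorted_wrt (<) (sl A)" by (simp add: strict_sorted_list_of_set)
  have l: "length (sl A) = card A" by simp
  show ?thesis
  proof
    assume "sl A ! i < sl A ! j"
    then show "i < j"
      using s l assms sorted_wrt_nth_less[OF s, of j i]
      by (metis less_asym linorder_neqE_nat)
  next
    assume "i < j" then show "sl A ! i < sl A ! j" using sorted_wrt_nth_less[OF s] l assms by simp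
  qed
qed

lemma dc_take:
  assumes A: "finite A" and D: "D \<subseteq> A" and dc: "\<And>x y. x \<in> D \<Longrightarrow> y \<in> A \<Longrightarrow> y < x \<Longrightarrow> y \<in> D"
    and k: "card D = k"
  shows "D = set (take k (sl A))"
proof -
  define L where "L = sl A"
  have dist: "distinct L" and setL: "set L = A" and lenL: "length L = card A"
    using A by (auto simp: L_def)
  have kle: "k \<le> card A" using k D A card_mono by blast
  define D' where "D' = set (take k L)"
  have cD': "card D' = k" unfolding D'_def using dist kle lenL
    by (simp add: distinct_card min_def)
  have D'A: "D' \<subseteq> A" unfolding D'_def using setL set_take_subset by metis
  have dc': "y \<in> D'" if "x \<in> D'" "y \<in> A" "y < x" for x y
  proof -
    from that(1) obtain j where j: "j < k" "x = L ! j" unfolding D'_def using kle lenL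
      by (auto simp: in_set_conv_nth)
    from that(2) obtain i where i: "i < card A" "y = L ! i" using setL lenL by (auto simp: in_set_conv_nth)
    have "i < j" using sl_less_iff[OF A i(1), of j] j kle that(3) i unfolding L_def by simp
    have "i < length (take k L)" using \<open>i < j\<close> j kle lenL by simp
    then have "take k L ! i \<in> D'" unfolding D'_def by (rule nth_mem)
    then show ?thesis using \<open>i < j\<close> j i by simp
  qed
  have fin: "finite D" "finite D'" using A D D'A finite_subset by auto
  have "D \<subseteq> D' \<or> D' \<subseteq> D"
  proof (rule ccontr)
    assume "\<not> ?thesis"
    then obtain x y where "x \<in> D" "x \<notin> D'" "y \<in> D'" "y \<notin> D" by blast
    moreover have "x \<noteq> y" using \<open>x \<in> D\<close> \<open>y \<notin> D\<close> by blast
    ultimately show False using dc[of x y] dc'[of y x] D D'A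
      by (meson linorder_neqE_nat subsetD)
  qed
  then have "D = D'" using fin cD' k
    by (metis card_seteq order_refl)
  then show ?thesis unfolding D'_def L_def .
qed


lemma take_dc:
  assumes A: "finite A" and x: "x \<in> set (take k (sl A))" and y: "y \<in> A" "y < x"
  shows "y \<in> set (take k (sl A))"
proof -
  define L where "L = sl A"
  have lenL: "length L = card A" and setL: "set L = A" using A by (auto simp: L_def)
  from x obtain j where j: "j < k" "j < card A" "x = L ! j" unfolding L_def[symmetric] using lenL
    by (auto simp: in_set_conv_nth)
  from y(1) obtain i where i: "i < card A" "y = L ! i" using setL lenL by (auto simp: in_set_conv_nth)
  have "i < j" using sl_less_iff[OF A i(1) j(2)] j i y(2) unfolding L_def by simp
  have "i < length (take k L)" using \<open>i < j\<close> j lenL by simp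
  then have "take k L ! i \<in> set (take k L)" by (rule nth_mem)
  then show ?thesis using \<open>i < j\<close> j i unfolding L_def by simp
qed

lemma nth_notin_take:
  assumes "distinct xs" "p < length xs" shows "xs ! p \<notin> set (take p xs)"
proof
  assume "xs ! p \<in> set (take p xs)"
  then obtain i where "i < p" "take p xs ! i = xs ! p" using assms(2) by (auto simp: in_set_conv_nth)
  then have "xs ! i = xs ! p" by simp
  then show False using assms \<open>i < p\<close> nth_eq_iff_index_eq by fastforce
qed

lemma nth_in_take:
  assumes "p < k" "p < length xs" shows "xs ! p \<in> set (take k xs)"
proof -
  have "p < length (take k xs)" using assms by simp
  then have "take k xs ! p \<in> set (take k xs)" by (rule nth_mem)
  then show ?thesis using assms by simp
qed

lemma take_2Suc:
  assumes "2 * j + 1 < length xs"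
  shows "set (take (2 * Suc j) xs) = set (take (2*j) xs) \<union> {xs ! (2*j), xs ! (2*j+1)}"
proof -
  have "take (Suc (2*j)) xs = take (2*j) xs @ [xs ! (2*j)]" using assms by (simp add: take_Suc_conv_app_nth)
  moreover have "take (Suc (Suc (2*j))) xs = take (Suc (2*j)) xs @ [xs ! (2*j+1)]" using assms
    by (simp add: take_Suc_conv_app_nth)
  ultimately show ?thesis by auto
qed

lemma pw_props:
  assumes fe: "finite e" and ff: "finite f" and d: "e \<inter> f = {}" and ne: "e \<union> f \<noteq> {}"
  defines "L \<equiv> sl (e \<union> f)"
  shows "length (pattern_word e f) = card (e \<union> f)"
    and "\<And>p q. p < card (e \<union> f) \<Longrightarrow> q < card (e \<union> f) \<Longrightarrow>
           (pattern_word e f ! p = pattern_word e f ! q) \<longleftrightarrow> ((L ! p \<in> e) \<longleftrightarrow> (L ! q \<in> e))"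
    and "pattern_word e f ! 0 = True"
proof -
  define a where "a = (if Min (e \<union> f) \<in> e then e else f)"
  have w: "pattern_word e f = map (\<lambda>x. x \<in> a) L" unfolding pattern_word_def a_def L_def Let_def by simp
  have fin: "finite (e \<union> f)" using fe ff by simp
  have lenL: "length L = card (e \<union> f)" and setL: "set L = e \<union> f" using fin by (auto simp: L_def)
  show "length (pattern_word e f) = card (e \<union> f)" using w lenL by simp
  have mem: "L ! p \<in> e \<union> f" if "p < card (e \<union> f)" for p using that lenL setL nth_mem by metis
  show "(pattern_word e f ! p = pattern_word e f ! q) \<longleftrightarrow> ((L ! p \<in> e) \<longleftrightarrow> (L ! q \<in> e))"
    if "p < card (e \<union> f)" "q < card (e \<union> f)" for p q
    using that w lenL mem[OF that(1)] mem[OF that(2)] d unfolding a_def by auto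
  have "L ! 0 = Min (e \<union> f)" unfolding L_def using sorted_list_of_set_nonempty[OF fin ne] by simp
  moreover have "0 < card (e \<union> f)" using fin ne by (simp add: card_gt_0_iff)
  moreover have "Min (e \<union> f) \<in> a" unfolding a_def using Min_in[OF fin ne] by auto
  ultimately show "pattern_word e f ! 0 = True" using w lenL by simp
qed


lemma upper_key:
  assumes fe: "finite e" and ff: "finite f" and d: "e \<inter> f = {}" and ce: "card e = r" and cf: "card f = r"
    and w: "pattern_word e f \<in> rpartite_patterns r" and i: "Suc i < r"
  shows "sl e ! i < sl f ! Suc i"
proof -
  define A where "A = e \<union> f"
  define L where "L = sl A"
  have finA: "finite A" using fe ff A_def by simp
  have cA: "card A = 2 * r" using card_Un_disjoint[OF fe ff d] ce cf A_def by simp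
  have neA: "A \<noteq> {}" using cA i by auto
  have lenL: "length L = 2 * r" and setL: "set L = A" and distL: "distinct L"
    using finA cA by (auto simp: L_def)
  have alt: "(L ! (2*j) \<in> e) \<noteq> (L ! (2*j+1) \<in> e)" if "j < r" for j
  proof -
    have "pattern_word e f ! (2*j) \<noteq> pattern_word e f ! (2*j+1)" using w that
      unfolding rpartite_patterns_def by auto
    then show ?thesis using pw_props(2)[OF fe ff d, of "2*j" "2*j+1"] that cA neA
      unfolding A_def L_def by auto
  qed
  define Q where "Q j = set (take (2*j) L)" for j
  have cQ: "card (Q j) = 2 * j" if "j \<le> r" for j
    unfolding Q_def using distL lenL that by (simp add: distinct_card min_def)
  have QA: "Q j \<subseteq> A" for j unfolding Q_def using setL set_take_subset by metis
  have cQe: "card (Q j \<inter> e) = j" if "j \<le> r" for j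
    using that
  proof (induction j)
    case 0 then show ?case by (simp add: Q_def)
  next
    case (Suc j)
    define x where "x = L ! (2*j)"
    define y where "y = L ! (2*j+1)"
    have lt: "2*j+1 < length L" using Suc.prems lenL by simp
    have QS: "Q (Suc j) = Q j \<union> {x, y}" unfolding Q_def x_def y_def using take_2Suc[OF lt] by simp
    have xn: "x \<notin> Q j" unfolding Q_def x_def using nth_notin_take[OF distL] lt by simp
    have yn': "y \<notin> set (take (2*j+1) L)" unfolding y_def using nth_notin_take[OF distL lt] .
    have "Q j \<subseteq> set (take (2*j+1) L)" unfolding Q_def by (simp add: set_take_subset_set_take)
    then have yn: "y \<notin> Q j" using yn' by blast
    have xy: "x \<noteq> y" unfolding x_def y_def using distL lt nth_eq_iff_index_eq by fastforce
    have finQ: "finite (Q j \<inter> e)" unfolding Q_def by simp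
    have ih: "card (Q j \<inter> e) = j" using Suc by simp
    have al: "(x \<in> e) \<noteq> (y \<in> e)" using alt[of j] Suc.prems unfolding x_def y_def by simp
    show ?case
    proof (cases "x \<in> e")
      case True
      then have "Q (Suc j) \<inter> e = insert x (Q j \<inter> e)" using al QS by auto
      then show ?thesis using finQ xn ih by simp
    next
      case False
      then have "Q (Suc j) \<inter> e = insert y (Q j \<inter> e)" using al QS by auto
      then show ?thesis using finQ yn ih by simp
    qed
  qed
  have cQf: "card (Q j \<inter> f) = j" if "j \<le> r" for j
  proof -
    have "Q j \<inter> f = Q j - (Q j \<inter> e)" using QA d A_def by auto
    then have "card (Q j \<inter> f) = card (Q j) - card (Q j \<inter> e)"
      by (simp add: card_Diff_subset Q_def)
    then show ?thesis using cQ[OF that] cQe[OF that] by simp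
  qed
  define QQ where "QQ = Q (Suc i)"
  have dcQ: "y \<in> QQ" if "x \<in> QQ" "y \<in> A" "y < x" for x y
    using take_dc[OF finA, of x "2 * Suc i" y] that unfolding QQ_def Q_def L_def by simp
  have Qe: "QQ \<inter> e = set (take (Suc i) (sl e))"
    by (rule dc_take[OF fe]) (use dcQ A_def cQe[of "Suc i"] i QQ_def in auto)
  have Qf: "QQ \<inter> f = set (take (Suc i) (sl f))"
    by (rule dc_take[OF ff]) (use dcQ A_def cQf[of "Suc i"] i QQ_def in auto)
  have ein: "sl e ! i \<in> QQ \<inter> e" unfolding Qe using nth_in_take[of i "Suc i" "sl e"] ce i by simp
  have fout: "sl f ! Suc i \<notin> QQ \<inter> f" unfolding Qf
    using nth_notin_take[of "sl f" "Suc i"] ff cf i by simp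
  have fin: "sl f ! Suc i \<in> f" using ff cf i nth_mem[of "Suc i" "sl f"] by simp
  have eine: "sl e ! i \<in> e" using ein by blast
  have "sl e ! i \<noteq> sl f ! Suc i" using eine fin d by (metis IntI empty_iff)
  moreover have "\<not> sl f ! Suc i < sl e ! i"
  proof
    assume "sl f ! Suc i < sl e ! i"
    then have "sl f ! Suc i \<in> QQ" using dcQ[of "sl e ! i" "sl f ! Suc i"] ein fin A_def by simp
    then show False using fout fin by blast
  qed
  ultimately show ?thesis by simp
qed

definition blk :: "nat \<Rightarrow> nat \<Rightarrow> nat set" where "blk n i = {i*n..<Suc i*n}"

definition P0 :: "nat \<Rightarrow> nat \<Rightarrow> nat set set" where
  "P0 r n = {S. S \<subseteq> {0..<r*n} \<and> card S = r \<and> (\<forall>i<r. card (S \<inter> blk n i) = 1)}"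

lemma lower_key:
  assumes e: "e \<in> P0 r n" and f: "f \<in> P0 r n" and d: "e \<inter> f = {}" and r: "r \<ge> 1"
  shows "pattern_word e f \<in> rpartite_patterns r"
proof -
  have fe: "finite e" and ff: "finite f" and ce: "card e = r" and cf: "card f = r"
    and eB: "\<And>i. i < r \<Longrightarrow> card (e \<inter> blk n i) = 1" and fB: "\<And>i. i < r \<Longrightarrow> card (f \<inter> blk n i) = 1"
    and eV: "e \<subseteq> {0..<r*n}" and fV: "f \<subseteq> {0..<r*n}"
    using e f unfolding P0_def by (auto intro: finite_subset)
  define A where "A = e \<union> f"
  define L where "L = sl A"
  have finA: "finite A" using fe ff A_def by simp
  have cA: "card A = 2 * r" using card_Un_disjoint[OF fe ff d] ce cf A_def by simp
  have neA: "A \<noteq> {}" using cA r by auto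
  have lenL: "length L = 2 * r" and setL: "set L = A" and distL: "distinct L"
    using finA cA by (auto simp: L_def)
  define Q where "Q j = A \<inter> {..<j*n}" for j
  have cAB: "card (A \<inter> blk n j) = 2" if "j < r" for j
  proof -
    have "A \<inter> blk n j = (e \<inter> blk n j) \<union> (f \<inter> blk n j)" unfolding A_def by auto
    moreover have "(e \<inter> blk n j) \<inter> (f \<inter> blk n j) = {}" using d by auto
    ultimately show ?thesis using eB[OF that] fB[OF that] fe ff
      by (simp add: card_Un_disjoint)
  qed
  have cQ: "card (Q j) = 2 * j" if "j \<le> r" for j
    using that
  proof (induction j)
    case 0 then show ?case by (simp add: Q_def)
  next
    case (Suc j)
    have "Q (Suc j) = Q j \<union> (A \<inter> blk n j)" unfolding Q_def blk_def by auto
    moreover have "Q j \<inter> (A \<inter> blk n j) = {}" unfolding Q_def blk_def by auto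
    moreover have "finite (Q j)" unfolding Q_def using finA by simp
    ultimately have "card (Q (Suc j)) = card (Q j) + card (A \<inter> blk n j)"
      using finA by (simp add: card_Un_disjoint)
    then show ?case using Suc cAB[of j] by simp
  qed
  have Qt: "Q j = set (take (2*j) L)" if "j \<le> r" for j
    unfolding L_def by (rule dc_take[OF finA]) (use cQ[OF that] in \<open>auto simp: Q_def\<close>)
  have alt: "(L ! (2*j) \<in> e) \<noteq> (L ! (2*j+1) \<in> e)" if j: "j < r" for j
  proof -
    define x where "x = L ! (2*j)"
    define y where "y = L ! (2*j+1)"
    have lt: "2*j+1 < length L" using j lenL by simp
    have QS: "Q (Suc j) = set (take (2 * Suc j) L)" using Qt[of "Suc j"] j by simp
    have Qj: "Q j = set (take (2 * j) L)" using Qt[of j] j by simp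
    have "x \<in> Q (Suc j)" "y \<in> Q (Suc j)" unfolding QS x_def y_def
      using lt by (auto intro!: nth_in_take)
    moreover have "x \<notin> Q j" unfolding x_def Qj using nth_notin_take[OF distL] lt by simp
    moreover have "y \<notin> Q j"
    proof -
      have "y \<notin> set (take (2*j+1) L)" unfolding y_def using nth_notin_take[OF distL lt] .
      moreover have "Q j \<subseteq> set (take (2*j+1) L)" unfolding Qj
        by (simp add: set_take_subset_set_take)
      ultimately show ?thesis by blast
    qed
    ultimately have xB: "x \<in> A \<inter> blk n j" and yB: "y \<in> A \<inter> blk n j"
      unfolding Q_def blk_def by auto
    have xy: "x \<noteq> y" unfolding x_def y_def using distL lt nth_eq_iff_index_eq by fastforce
    have two: "\<not> (x \<in> S \<and> y \<in> S)" if "card (S \<inter> blk n j) = 1" "finite S" for S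
    proof
      assume "x \<in> S \<and> y \<in> S"
      then have "{x, y} \<subseteq> S \<inter> blk n j" using xB yB by auto
      then have "card {x, y} \<le> card (S \<inter> blk n j)" using that(2) by (intro card_mono) auto
      then show False using xy that(1) by simp
    qed
    have "x \<in> e \<union> f" "y \<in> e \<union> f" using xB yB A_def by auto
    then have "(x \<in> e) \<noteq> (y \<in> e)" using two[OF eB[OF j] fe] two[OF fB[OF j] ff] by blast
    then show ?thesis by (simp add: x_def y_def)
  qed
  have len: "length (pattern_word e f) = 2 * r" using pw_props(1)[OF fe ff d] cA A_def neA by simp
  have neA': "e \<union> f \<noteq> {}" using neA A_def by simp
  have "pattern_word e f ! (2*j) \<noteq> pattern_word e f ! (2*j+1)" if "j < r" for j
  proof -
    have c1: "2*j < card (e \<union> f)" "2*j+1 < card (e \<union> f)" using that cA A_def by auto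
    have iff: "(pattern_word e f ! (2*j) = pattern_word e f ! (2*j+1)) \<longleftrightarrow> ((L ! (2*j) \<in> e) \<longleftrightarrow> (L ! (2*j+1) \<in> e))"
      using pw_props(2)[OF fe ff d neA' c1] unfolding L_def A_def .
    show ?thesis using iff alt[OF that] by blast
  qed
  moreover have "pattern_word e f ! 0 = True" using pw_props(3)[OF fe ff d neA'] .
  ultimately show ?thesis unfolding rpartite_patterns_def mem_Collect_eq using len
    by (intro conjI allI impI) simp_all
qed


definition RS :: "nat \<Rightarrow> nat \<Rightarrow> nat set set" where
  "RS r n = {S. S \<subseteq> {0..<r*n} \<and> card S = r}"

lemma om_props:
  assumes "M \<in> matchings r n"
  shows "card M = n" "\<And>e. e \<in> M \<Longrightarrow> card e = r" "pairwise disjnt M" "\<Union>M = {0..<r*n}"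
    "M \<subseteq> RS r n" "finite M"
proof -
  show c: "card M = n" "\<And>e. e \<in> M \<Longrightarrow> card e = r" "pairwise disjnt M" and u: "\<Union>M = {0..<r*n}"
    using assms unfolding matchings_def ordered_matching_def by auto
  show "M \<subseteq> RS r n" using c u unfolding RS_def by auto
  have "M \<subseteq> Pow {0..<r*n}" using u by auto
  then show "finite M" by (rule finite_subset) simp
qed

lemma Ms_finite: "finite (matchings r n)"
proof -
  have "M \<subseteq> Pow {0..<r*n}" if "M \<in> matchings r n" for M
    using om_props(4)[OF that] Union_upper by (metis PowI subsetI)
  then have "matchings r n \<subseteq> Pow (Pow {0..<r*n})" by blast
  then show ?thesis by (rule finite_subset) simp
qed

lemma Ms_nonempty:
  assumes "r \<ge> 1" shows "matchings r n \<noteq> {}"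
proof -
  define bl where "bl i = {i*r..<i*r+r}" for i
  define M0 where "M0 = bl ` {..<n}"
  have inj: "inj_on bl {..<n}"
  proof (rule inj_onI)
    fix i j assume "bl i = bl j"
    have "i*r \<in> bl i" "j*r \<in> bl j" using assms unfolding bl_def by auto
    then have "i*r \<in> bl j" "j * r \<in> bl i" using \<open>bl i = bl j\<close> by auto
    then have "j*r \<le> i*r" "i*r \<le> j*r" unfolding bl_def atLeastLessThan_iff by auto
    then have "i*r = j*r" by linarith
    then show "i = j" using assms by (cases "r = 0") auto
  qed
  have "card M0 = n" unfolding M0_def using card_image[OF inj] by simp
  moreover have "\<forall>e\<in>M0. card e = r" unfolding M0_def bl_def by auto
  moreover have "pairwise disjnt M0"
  proof (rule pairwiseI)
    fix x y assume "x \<in> M0" "y \<in> M0" "x \<noteq> y"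
    then obtain i j where ij: "x = bl i" "y = bl j" "i \<noteq> j" unfolding M0_def by auto
    show "disjnt x y"
    proof (cases "i < j")
      case True
      have "Suc i * r \<le> j * r" using True by (intro mult_le_mono1) simp
      then have "i * r + r \<le> j * r" by simp
      then show ?thesis unfolding ij bl_def disjnt_def by auto
    next
      case False
      then have "j < i" using ij(3) by simp
      have "Suc j * r \<le> i * r" using \<open>j < i\<close> by (intro mult_le_mono1) simp
      then have "j * r + r \<le> i * r" by simp
      then show ?thesis unfolding ij bl_def disjnt_def by auto
    qed
  qed
  moreover have "\<Union>M0 = {0..<r*n}"
  proof
    show "\<Union>M0 \<subseteq> {0..<r*n}"
    proof
      fix x assume "x \<in> \<Union>M0"
      then obtain i where i: "i < n" "x < i*r+r" unfolding M0_def bl_def by auto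
      have "Suc i * r \<le> n * r" using i(1) by (intro mult_le_mono1) simp
      then show "x \<in> {0..<r*n}" using i(2) by (simp add: mult.commute)
    qed
  next
    show "{0..<r*n} \<subseteq> \<Union>M0"
    proof
      fix x assume "x \<in> {0..<r*n}"
      then have x: "x < r * n" by simp
      have "x div r < n" using x by (simp add: less_mult_imp_div_less mult.commute)
      moreover have "x \<in> bl (x div r)"
      proof -
        have "x mod r < r" using assms by simp
        moreover have "x div r * r + x mod r = x" by simp
        ultimately show ?thesis unfolding bl_def atLeastLessThan_iff by linarith
      qed
      ultimately show "x \<in> \<Union>M0" unfolding M0_def by auto
    qed
  qed
  ultimately have "M0 \<in> matchings r n" unfolding matchings_def ordered_matching_def by auto
  then show ?thesis by auto
qed


lemma om_image:
  assumes M: "M \<in> matchings r n" and pi: "bij_betw \<pi> {0..<r*n} {0..<r*n}"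
  shows "(\<lambda>e. \<pi> ` e) ` M \<in> matchings r n"
proof -
  define V where "V = {0..<r*n}"
  have inj: "inj_on \<pi> V" and im: "\<pi> ` V = V" using pi unfolding bij_betw_def V_def by auto
  have sub: "e \<subseteq> V" if "e \<in> M" for e using om_props(4)[OF M] that V_def by blast
  have injP: "inj_on ((`) \<pi>) (Pow V)" using inj by (rule inj_on_image_Pow)
  have injM: "inj_on ((`) \<pi>) M" using injP sub by (meson PowI inj_on_subset subsetI)
  have "card ((\<lambda>e. \<pi> ` e) ` M) = n" using card_image[OF injM] om_props(1)[OF M] by simp
  moreover have "\<forall>e'\<in>(\<lambda>e. \<pi> ` e) ` M. card e' = r"
  proof
    fix e' assume "e' \<in> (\<lambda>e. \<pi> ` e) ` M"
    then obtain e where e: "e \<in> M" "e' = \<pi> ` e" by blast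
    have "inj_on \<pi> e" using inj sub[OF e(1)] inj_on_subset by blast
    then show "card e' = r" using card_image[of \<pi> e] e om_props(2)[OF M e(1)] by simp
  qed
  moreover have "pairwise disjnt ((\<lambda>e. \<pi> ` e) ` M)"
  proof (rule pairwiseI)
    fix x y assume "x \<in> (\<lambda>e. \<pi> ` e) ` M" "y \<in> (\<lambda>e. \<pi> ` e) ` M" "x \<noteq> y"
    then obtain e f where ef: "e \<in> M" "f \<in> M" "x = \<pi> ` e" "y = \<pi> ` f" by blast
    then have "e \<noteq> f" using \<open>x \<noteq> y\<close> by blast
    then have "disjnt e f" using om_props(3)[OF M] ef pairwiseD by metis
    then have "e \<inter> f = {}" unfolding disjnt_def .
    moreover have "\<pi> ` e \<inter> \<pi> ` f = \<pi> ` (e \<inter> f)"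
      using inj_on_image_Int[OF inj sub[OF ef(1)] sub[OF ef(2)]] by simp
    ultimately show "disjnt x y" unfolding disjnt_def ef by simp
  qed
  moreover have "\<Union>((\<lambda>e. \<pi> ` e) ` M) = {0..<r*n}"
  proof -
    have "\<Union>((\<lambda>e. \<pi> ` e) ` M) = \<pi> ` (\<Union>M)" by (simp add: image_Union)
    also have "\<dots> = \<pi> ` V" using om_props(4)[OF M] V_def by simp
    finally show ?thesis using im V_def by simp
  qed
  ultimately show ?thesis unfolding matchings_def ordered_matching_def by simp
qed

lemma perm_le:
  assumes pi: "bij_betw \<pi> {0..<r*n} {0..<r*n}" and Q: "\<And>X. X \<in> Q \<Longrightarrow> X \<subseteq> {0..<r*n}"
  shows "card {M \<in> matchings r n. Q \<subseteq> M} \<le> card {M \<in> matchings r n. (\<lambda>e. \<pi> ` e) ` Q \<subseteq> M}"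
proof -
  define V where "V = {0..<r*n}"
  have inj: "inj_on \<pi> V" using pi unfolding bij_betw_def V_def by auto
  have injP: "inj_on ((`) \<pi>) (Pow V)" using inj by (rule inj_on_image_Pow)
  have injPP: "inj_on ((`) ((`) \<pi>)) (Pow (Pow V))" using injP by (rule inj_on_image_Pow)
  have "matchings r n \<subseteq> Pow (Pow V)"
  proof
    fix M assume M: "M \<in> matchings r n"
    have "e \<subseteq> V" if "e \<in> M" for e using om_props(4)[OF M] that V_def by blast
    then show "M \<in> Pow (Pow V)" by blast
  qed
  then have injM: "inj_on ((`) ((`) \<pi>)) {M \<in> matchings r n. Q \<subseteq> M}"
    using injPP inj_on_subset by (metis (no_types, lifting) mem_Collect_eq subsetI subset_iff)
  have "(`) ((`) \<pi>) ` {M \<in> matchings r n. Q \<subseteq> M} \<subseteq> {M \<in> matchings r n. (\<lambda>e. \<pi> ` e) ` Q \<subseteq> M}"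
    using om_image[OF _ pi] by auto
  then show ?thesis using card_inj_on_le[OF injM] Ms_finite by (metis (no_types, lifting) finite_subset mem_Collect_eq subsetI)
qed

lemma exists_perm:
  fixes V S T S' T' :: "nat set"
  assumes V: "finite V" and S: "S \<subseteq> V" "T \<subseteq> V" "S \<inter> T = {}" and S': "S' \<subseteq> V" "T' \<subseteq> V" "S' \<inter> T' = {}"
    and c: "card S = card S'" "card T = card T'"
  shows "\<exists>\<pi>. bij_betw \<pi> V V \<and> \<pi> ` S = S' \<and> \<pi> ` T = T'"
proof -
  define R where "R = V - (S \<union> T)"
  define R' where "R' = V - (S' \<union> T')"
  have fin: "finite S" "finite T" "finite S'" "finite T'" "finite R" "finite R'"
    using V S S' R_def R'_def finite_subset by auto
  have "card (S \<union> T) = card (S' \<union> T')" using fin S S' c by (simp add: card_Un_disjoint)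
  moreover have "card (V - (S \<union> T)) = card V - card (S \<union> T)"
    using S V by (intro card_Diff_subset) (auto intro: finite_subset)
  moreover have "card (V - (S' \<union> T')) = card V - card (S' \<union> T')"
    using S' V by (intro card_Diff_subset) (auto intro: finite_subset)
  ultimately have cR: "card R = card R'" unfolding R_def R'_def by simp
  obtain g1 where g1: "bij_betw g1 S S'" using finite_same_card_bij fin c by metis
  obtain g2 where g2: "bij_betw g2 T T'" using finite_same_card_bij fin c by metis
  obtain g3 where g3: "bij_betw g3 R R'" using finite_same_card_bij fin cR by metis
  define \<pi> where "\<pi> x = (if x \<in> S then g1 x else if x \<in> T then g2 x else g3 x)" for x
  have b1: "bij_betw \<pi> S S'" using g1 by (rule bij_betw_cong[THEN iffD1, rotated]) (simp add: \<pi>_def)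
  have b2: "bij_betw \<pi> T T'" using g2 by (rule bij_betw_cong[THEN iffD1, rotated]) (use S in \<open>auto simp: \<pi>_def\<close>)
  have b3: "bij_betw \<pi> R R'" using g3 by (rule bij_betw_cong[THEN iffD1, rotated]) (simp add: \<pi>_def R_def)
  have b12: "bij_betw \<pi> (S \<union> T) (S' \<union> T')" using bij_betw_combine[OF b1 b2] S' by blast
  have "(S' \<union> T') \<inter> R' = {}" unfolding R'_def by blast
  then have b: "bij_betw \<pi> (S \<union> T \<union> R) (S' \<union> T' \<union> R')" using bij_betw_combine[OF b12 b3] by blast
  have "S \<union> T \<union> R = V" "S' \<union> T' \<union> R' = V" using S S' R_def R'_def by auto
  then have "bij_betw \<pi> V V" using b by simp
  moreover have "\<pi> ` S = S'" "\<pi> ` T = T'" using b1 b2 bij_betw_imp_surj_on by auto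
  ultimately show ?thesis by blast
qed


definition cnt1 :: "nat \<Rightarrow> nat \<Rightarrow> nat set \<Rightarrow> nat" where
  "cnt1 r n S = card {M \<in> matchings r n. S \<in> M}"
definition cnt2 :: "nat \<Rightarrow> nat \<Rightarrow> nat set \<Rightarrow> nat set \<Rightarrow> nat" where
  "cnt2 r n S T = card {M \<in> matchings r n. S \<in> M \<and> T \<in> M}"

lemma cnt1_le:
  assumes S: "S \<in> RS r n" and S': "S' \<in> RS r n"
  shows "cnt1 r n S \<le> cnt1 r n S'"
proof -
  obtain \<pi> where pi: "bij_betw \<pi> {0..<r*n} {0..<r*n}" "\<pi> ` S = S'" "\<pi> ` {} = {}"
    using exists_perm[of "{0..<r*n}" S "{}" S' "{}"] S S' unfolding RS_def by auto
  have "card {M \<in> matchings r n. {S} \<subseteq> M} \<le> card {M \<in> matchings r n. (\<lambda>e. \<pi> ` e) ` {S} \<subseteq> M}"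
    by (rule perm_le[OF pi(1)]) (use S in \<open>auto simp: RS_def\<close>)
  then show ?thesis unfolding cnt1_def using pi(2) by simp
qed

lemma cnt1_eq: "S \<in> RS r n \<Longrightarrow> S' \<in> RS r n \<Longrightarrow> cnt1 r n S = cnt1 r n S'"
  using cnt1_le le_antisym by metis

lemma cnt2_le:
  assumes S: "S \<in> RS r n" "T \<in> RS r n" "S \<inter> T = {}" and S': "S' \<in> RS r n" "T' \<in> RS r n" "S' \<inter> T' = {}"
  shows "cnt2 r n S T \<le> cnt2 r n S' T'"
proof -
  obtain \<pi> where pi: "bij_betw \<pi> {0..<r*n} {0..<r*n}" "\<pi> ` S = S'" "\<pi> ` T = T'"
    using exists_perm[of "{0..<r*n}" S T S' T'] S S' unfolding RS_def by auto
  have "card {M \<in> matchings r n. {S, T} \<subseteq> M} \<le> card {M \<in> matchings r n. (\<lambda>e. \<pi> ` e) ` {S, T} \<subseteq> M}"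
    by (rule perm_le[OF pi(1)]) (use S in \<open>auto simp: RS_def\<close>)
  then show ?thesis unfolding cnt2_def using pi(2,3) by simp
qed

lemma cnt2_eq:
  "S \<in> RS r n \<Longrightarrow> T \<in> RS r n \<Longrightarrow> S \<inter> T = {} \<Longrightarrow> S' \<in> RS r n \<Longrightarrow> T' \<in> RS r n \<Longrightarrow> S' \<inter> T' = {}
   \<Longrightarrow> cnt2 r n S T = cnt2 r n S' T'"
  using cnt2_le le_antisym by metis

lemma cnt2_zero:
  assumes "S \<noteq> T" "S \<inter> T \<noteq> {}"
  shows "cnt2 r n S T = 0"
proof -
  have "{M \<in> matchings r n. S \<in> M \<and> T \<in> M} = {}"
  proof (rule ccontr)
    assume "\<not> ?thesis"
    then obtain M where M: "M \<in> matchings r n" "S \<in> M" "T \<in> M" by blast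
    then have "disjnt S T" using om_props(3)[OF M(1)] assms(1) pairwiseD by metis
    then show False using assms(2) unfolding disjnt_def by simp
  qed
  then show ?thesis unfolding cnt2_def by (metis card.empty)
qed

lemma card_filter_sum: assumes "finite A" shows "card {x \<in> A. P x} = (\<Sum>x\<in>A. of_bool (P x) :: nat)"
proof -
  have "(\<Sum>x\<in>A. of_bool (P x) :: nat) = of_nat (card (A \<inter> {x. P x}))" using assms by simp
  moreover have "A \<inter> {x. P x} = {x \<in> A. P x}" by blast
  ultimately show ?thesis by simp
qed

lemma RS_finite: "finite (RS r n)"
  unfolding RS_def by (rule finite_subset[of _ "Pow {0..<r*n}"]) auto

lemma card_RS: "card (RS r n) = (r*n) choose r"
  unfolding RS_def using n_subsets[of "{0..<r*n}" r] by simp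

lemma sum_cnt1: "(\<Sum>S\<in>RS r n. cnt1 r n S) = n * card (matchings r n)"
proof -
  have "(\<Sum>S\<in>RS r n. cnt1 r n S) = (\<Sum>S\<in>RS r n. \<Sum>M\<in>matchings r n. of_bool (S \<in> M))"
    unfolding cnt1_def using card_filter_sum[OF Ms_finite] by simp
  also have "\<dots> = (\<Sum>M\<in>matchings r n. \<Sum>S\<in>RS r n. of_bool (S \<in> M))" by (rule sum.swap)
  also have "\<dots> = (\<Sum>M\<in>matchings r n. n)"
  proof (rule sum.cong[OF refl])
    fix M assume M: "M \<in> matchings r n"
    have "(\<Sum>S\<in>RS r n. of_bool (S \<in> M) :: nat) = card {S \<in> RS r n. S \<in> M}"
      using card_filter_sum[OF RS_finite] by simp
    also have "{S \<in> RS r n. S \<in> M} = M" using om_props(5)[OF M] by blast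
    finally show "(\<Sum>S\<in>RS r n. of_bool (S \<in> M)) = n" using om_props(1)[OF M] by simp
  qed
  finally show ?thesis by simp
qed

definition DP :: "nat \<Rightarrow> nat \<Rightarrow> (nat set \<times> nat set) set" where
  "DP r n = {(S, T). S \<in> RS r n \<and> T \<in> RS r n \<and> S \<inter> T = {}}"

lemma card_DP: "card (DP r n) = ((r*n) choose r) * ((r*n - r) choose r)"
proof -
  have eq: "DP r n = Sigma (RS r n) (\<lambda>S. {T. T \<subseteq> {0..<r*n} - S \<and> card T = r})"
    unfolding DP_def RS_def by auto
  have "card (DP r n) = (\<Sum>S\<in>RS r n. card {T. T \<subseteq> {0..<r*n} - S \<and> card T = r})"
    unfolding eq by (rule card_SigmaI[OF RS_finite]) auto
  also have "\<dots> = (\<Sum>S\<in>RS r n. (r*n - r) choose r)"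
  proof (rule sum.cong[OF refl])
    fix S assume S: "S \<in> RS r n"
    have Ss: "S \<subseteq> {0..<r*n}" "card S = r" using S unfolding RS_def by auto
    have "card ({0..<r*n} - S) = card {0..<r*n} - card S"
      using Ss by (intro card_Diff_subset) (auto intro: finite_subset)
    then have "card ({0..<r*n} - S) = r*n - r" using Ss by simp
    then show "card {T. T \<subseteq> {0..<r*n} - S \<and> card T = r} = (r*n - r) choose r"
      using n_subsets[of "{0..<r*n} - S" r] by simp
  qed
  finally show ?thesis using card_RS by simp
qed

lemma DP_finite: "finite (DP r n)"
proof -
  have "DP r n \<subseteq> RS r n \<times> RS r n" unfolding DP_def by auto
  then show ?thesis using RS_finite finite_subset by blast
qed

lemma sum_cnt2: assumes r1: "r \<ge> 1" shows "(\<Sum>p\<in>DP r n. cnt2 r n (fst p) (snd p)) = card (matchings r n) * (n * n - n)"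
proof -
  have "(\<Sum>p\<in>DP r n. cnt2 r n (fst p) (snd p))
      = (\<Sum>p\<in>DP r n. \<Sum>M\<in>matchings r n. of_bool (fst p \<in> M \<and> snd p \<in> M))"
    unfolding cnt2_def using card_filter_sum[OF Ms_finite] by simp
  also have "\<dots> = (\<Sum>M\<in>matchings r n. \<Sum>p\<in>DP r n. of_bool (fst p \<in> M \<and> snd p \<in> M))" by (rule sum.swap)
  also have "\<dots> = (\<Sum>M\<in>matchings r n. n * n - n)"
  proof (rule sum.cong[OF refl])
    fix M assume M: "M \<in> matchings r n"
    have "(\<Sum>p\<in>DP r n. of_bool (fst p \<in> M \<and> snd p \<in> M) :: nat) = card {p \<in> DP r n. fst p \<in> M \<and> snd p \<in> M}"
      using card_filter_sum[OF DP_finite] by simp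
    also have "{p \<in> DP r n. fst p \<in> M \<and> snd p \<in> M} = M \<times> M - (\<lambda>x. (x, x)) ` M"
    proof
      show "{p \<in> DP r n. fst p \<in> M \<and> snd p \<in> M} \<subseteq> M \<times> M - (\<lambda>x. (x, x)) ` M"
      proof
        fix p assume p: "p \<in> {p \<in> DP r n. fst p \<in> M \<and> snd p \<in> M}"
        obtain S T where pST: "p = (S, T)" by (cases p)
        have "S \<inter> T = {}" "S \<in> RS r n" using p pST unfolding DP_def by auto
        moreover have "card S = r" using \<open>S \<in> RS r n\<close> RS_def by simp
        then have "S \<noteq> {}" using r1 by auto
        ultimately have "S \<noteq> T" by auto
        then show "p \<in> M \<times> M - (\<lambda>x. (x, x)) ` M" using p pST by auto
      qed
    next
      show "M \<times> M - (\<lambda>x. (x, x)) ` M \<subseteq> {p \<in> DP r n. fst p \<in> M \<and> snd p \<in> M}"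
      proof
        fix p assume p: "p \<in> M \<times> M - (\<lambda>x. (x, x)) ` M"
        obtain S T where pST: "p = (S, T)" by (cases p)
        have ST: "S \<in> M" "T \<in> M" "S \<noteq> T" using p pST by auto
        then have "disjnt S T" using om_props(3)[OF M] pairwiseD by metis
        then show "p \<in> {p \<in> DP r n. fst p \<in> M \<and> snd p \<in> M}"
          using ST pST om_props(5)[OF M] unfolding DP_def disjnt_def by auto
      qed
    qed
    also have "card (M \<times> M - (\<lambda>x. (x, x)) ` M) = n * n - n"
    proof -
      have fM: "finite M" using om_props(6)[OF M] .
      have "card (M \<times> M - (\<lambda>x. (x, x)) ` M) = card (M \<times> M) - card ((\<lambda>x. (x, x)) ` M)"
        using fM by (intro card_Diff_subset) auto
      moreover have "card ((\<lambda>x. (x, x)) ` M) = card M" by (rule card_image) (auto intro: inj_onI)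
      ultimately show ?thesis using om_props(1)[OF M] by (simp add: card_cartesian_product)
    qed
    finally show "(\<Sum>p\<in>DP r n. of_bool (fst p \<in> M \<and> snd p \<in> M)) = n * n - n" .
  qed
  finally show ?thesis by simp
qed


lemma S0T0:
  assumes r: "r \<ge> 1" and n: "n \<ge> 2"
  shows "{0..<r} \<in> RS r n" "{r..<2*r} \<in> RS r n" "{0..<r} \<inter> {r..<2*r} = {}"
proof -
  have "2 * r \<le> r * n" using n by (metis mult.commute mult_le_mono2)
  then show "{0..<r} \<in> RS r n" "{r..<2*r} \<in> RS r n" unfolding RS_def by auto
  show "{0..<r} \<inter> {r..<2*r} = {}" by auto
qed

definition c1 where "c1 r n = cnt1 r n {0..<r}"
definition c2 where "c2 r n = cnt2 r n {0..<r} {r..<2*r}"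

lemma c1_eq:
  assumes r: "r \<ge> 1" and n: "n \<ge> 2"
  shows "c1 r n * ((r*n) choose r) = n * card (matchings r n)"
proof -
  have e: "cnt1 r n S = c1 r n" if "S \<in> RS r n" for S
    unfolding c1_def using cnt1_eq[OF that S0T0(1)[OF r n]] .
  have "(\<Sum>S\<in>RS r n. cnt1 r n S) = (\<Sum>S\<in>RS r n. c1 r n)"
    by (rule sum.cong[OF refl]) (rule e)
  then show ?thesis using sum_cnt1[of r n] card_RS[of r n] by (simp add: mult.commute)
qed

lemma c2_eq:
  assumes r: "r \<ge> 1" and n: "n \<ge> 2"
  shows "c2 r n * ((r*n) choose r) * ((r*n - r) choose r) = card (matchings r n) * (n * n - n)"
proof -
  have e: "cnt2 r n (fst p) (snd p) = c2 r n" if "p \<in> DP r n" for p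
  proof -
    have "fst p \<in> RS r n" "snd p \<in> RS r n" "fst p \<inter> snd p = {}" using that unfolding DP_def by auto
    then show ?thesis unfolding c2_def using cnt2_eq S0T0[OF r n] by blast
  qed
  have "(\<Sum>p\<in>DP r n. cnt2 r n (fst p) (snd p)) = (\<Sum>p\<in>DP r n. c2 r n)"
    by (rule sum.cong[OF refl]) (rule e)
  then show ?thesis using sum_cnt2[OF r, of n] card_DP[of r n] by (simp add: mult.commute mult.left_commute)
qed

lemma sumX:
  assumes r: "r \<ge> 1" and n: "n \<ge> 2" and F: "F \<subseteq> RS r n"
  shows "(\<Sum>M\<in>matchings r n. card (M \<inter> F)) = card F * c1 r n"
proof -
  have fF: "finite F" using F RS_finite finite_subset by blast
  have "(\<Sum>M\<in>matchings r n. card (M \<inter> F)) = (\<Sum>M\<in>matchings r n. \<Sum>S\<in>F. of_bool (S \<in> M))"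
  proof (rule sum.cong[OF refl])
    fix M assume "M \<in> matchings r n"
    have "M \<inter> F = {S \<in> F. S \<in> M}" by blast
    then show "card (M \<inter> F) = (\<Sum>S\<in>F. of_bool (S \<in> M))" using card_filter_sum[OF fF] by simp
  qed
  also have "\<dots> = (\<Sum>S\<in>F. \<Sum>M\<in>matchings r n. of_bool (S \<in> M))" by (rule sum.swap)
  also have "\<dots> = (\<Sum>S\<in>F. c1 r n)"
  proof (rule sum.cong[OF refl])
    fix S assume S: "S \<in> F"
    have "(\<Sum>M\<in>matchings r n. of_bool (S \<in> M)) = cnt1 r n S"
      unfolding cnt1_def using card_filter_sum[OF Ms_finite] by simp
    also have "\<dots> = c1 r n" unfolding c1_def using cnt1_eq[OF _ S0T0(1)[OF r n], of S] S F by blast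
    finally show "(\<Sum>M\<in>matchings r n. of_bool (S \<in> M)) = c1 r n" .
  qed
  finally show ?thesis by simp
qed

lemma sumX2:
  assumes r: "r \<ge> 1" and n: "n \<ge> 2" and F: "F \<subseteq> RS r n"
  shows "(\<Sum>M\<in>matchings r n. card (M \<inter> F) ^ 2) \<le> card F * c1 r n + card F * card F * c2 r n"
proof -
  have fF: "finite F" using F RS_finite finite_subset by blast
  have "(\<Sum>M\<in>matchings r n. card (M \<inter> F) ^ 2) = (\<Sum>M\<in>matchings r n. \<Sum>S\<in>F. \<Sum>T\<in>F. of_bool (S \<in> M \<and> T \<in> M))"
  proof (rule sum.cong[OF refl])
    fix M assume "M \<in> matchings r n"
    have "M \<inter> F = {S \<in> F. S \<in> M}" by blast
    then have "card (M \<inter> F) = (\<Sum>S\<in>F. of_bool (S \<in> M))" using card_filter_sum[OF fF] by simp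
    then have "card (M \<inter> F) ^ 2 = (\<Sum>S\<in>F. of_bool (S \<in> M)) * (\<Sum>T\<in>F. of_bool (T \<in> M))"
      by (simp add: power2_eq_square)
    also have "\<dots> = (\<Sum>S\<in>F. \<Sum>T\<in>F. of_bool (S \<in> M) * of_bool (T \<in> M))" by (rule sum_product)
    finally show "card (M \<inter> F) ^ 2 = (\<Sum>S\<in>F. \<Sum>T\<in>F. of_bool (S \<in> M \<and> T \<in> M))" by (simp add: of_bool_conj)
  qed
  also have "\<dots> = (\<Sum>S\<in>F. \<Sum>M\<in>matchings r n. \<Sum>T\<in>F. of_bool (S \<in> M \<and> T \<in> M))" by (rule sum.swap)
  also have "\<dots> = (\<Sum>S\<in>F. \<Sum>T\<in>F. \<Sum>M\<in>matchings r n. of_bool (S \<in> M \<and> T \<in> M))"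
    by (rule sum.cong[OF refl]) (rule sum.swap)
  also have "\<dots> = (\<Sum>S\<in>F. \<Sum>T\<in>F. cnt2 r n S T)"
    unfolding cnt2_def using card_filter_sum[OF Ms_finite] by simp
  also have "\<dots> \<le> (\<Sum>S\<in>F. c1 r n + card F * c2 r n)"
  proof (rule sum_mono)
    fix S assume S: "S \<in> F"
    have "(\<Sum>T\<in>F. cnt2 r n S T) = cnt2 r n S S + (\<Sum>T\<in>F - {S}. cnt2 r n S T)"
      using sum.remove[OF fF S] by simp
    also have "cnt2 r n S S = c1 r n"
    proof -
      have "cnt2 r n S S = cnt1 r n S" unfolding cnt2_def cnt1_def by simp
      also have "\<dots> = c1 r n" unfolding c1_def using cnt1_eq[OF _ S0T0(1)[OF r n], of S] S F by blast
      finally show ?thesis .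
    qed
    also have "(\<Sum>T\<in>F - {S}. cnt2 r n S T) \<le> (\<Sum>T\<in>F - {S}. c2 r n)"
    proof (rule sum_mono)
      fix T assume T: "T \<in> F - {S}"
      show "cnt2 r n S T \<le> c2 r n"
      proof (cases "S \<inter> T = {}")
        case True
        have "S \<in> RS r n" "T \<in> RS r n" using S T F by auto
        then show ?thesis unfolding c2_def using cnt2_eq[OF _ _ True S0T0[OF r n]] by simp
      next
        case False
        have "S \<noteq> T" using T by blast
        then have "cnt2 r n S T = 0" using cnt2_zero[of S T r n] False by blast
        then show ?thesis by simp
      qed
    qed
    also have "(\<Sum>T\<in>F - {S}. c2 r n) \<le> card F * c2 r n"
      using fF by (simp add: card_Diff_subset S) 
    finally show "(\<Sum>T\<in>F. cnt2 r n S T) \<le> c1 r n + card F * c2 r n" by simp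
  qed
  also have "\<dots> = card F * c1 r n + card F * card F * c2 r n" by (simp add: algebra_simps)
  finally show ?thesis .
qed


definition Cb :: "nat \<Rightarrow> nat \<Rightarrow> real" where "Cb r n = real ((r*n) choose r)"
definition Cb' :: "nat \<Rightarrow> nat \<Rightarrow> real" where "Cb' r n = real ((r*n - r) choose r)"
definition Wn :: "nat \<Rightarrow> nat \<Rightarrow> real" where
  "Wn r n = real n + max 0 (real n * (real n - 1) * Cb r n / Cb' r n - real n ^ 2)"

lemma Cb_pos: assumes "r \<ge> 1" "n \<ge> 2" shows "Cb r n > 0" "Cb' r n > 0"
proof -
  have h: "r * 2 \<le> r * n" using assms(2) by (rule mult_le_mono2)
  then have "r \<le> r * n - r" "r \<le> r * n" by arith+
  then show "Cb r n > 0" "Cb' r n > 0" unfolding Cb_def Cb'_def by auto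
qed

lemma cheb:
  assumes r: "r \<ge> 1" and n: "n \<ge> 2" and F: "F \<subseteq> RS r n" and dlt: "\<delta> > 0"
  shows "real (card {M \<in> matchings r n. \<delta> \<le> \<bar>real (card (M \<inter> F)) - real (card F) * real n / Cb r n\<bar>})
           / real (card (matchings r n)) \<le> Wn r n / \<delta>^2"
proof -
  define Ms where "Ms = matchings r n"
  define m where "m = real (card Ms)"
  define C where "C = Cb r n"
  define C' where "C' = Cb' r n"
  define f where "f = real (card F)"
  define \<mu> where "\<mu> = f * real n / C"
  define X where "X M = real (card (M \<inter> F))" for M
  have finMs: "finite Ms" unfolding Ms_def by (rule Ms_finite)
  have m0: "m > 0" unfolding m_def Ms_def using Ms_nonempty[OF r, of n] Ms_finite[of r n]
    by (simp add: card_gt_0_iff)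
  have C0: "C > 0" "C' > 0" using Cb_pos[OF r n] C_def C'_def by auto
  have fC: "f \<le> C"
  proof -
    have "card F \<le> card (RS r n)" using F RS_finite card_mono by blast
    then show ?thesis unfolding f_def C_def Cb_def card_RS by simp
  qed
  have f0: "f \<ge> 0" unfolding f_def by simp
  have e1: "real (c1 r n) * C = real n * m"
    using arg_cong[OF c1_eq[OF r n], of real] unfolding m_def Ms_def C_def Cb_def by simp
  have c1r: "real (c1 r n) = real n * m / C"
    using e1 C0 by (simp add: eq_divide_eq)
  have nn: "real (n * n - n) = real n * (real n - 1)"
    using n by (simp add: of_nat_diff algebra_simps)
  have e2: "real (c2 r n) * C * C' = m * real (n * n - n)"
    using arg_cong[OF c2_eq[OF r n], of real] unfolding m_def Ms_def C_def Cb_def C'_def Cb'_def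
    by (simp only: of_nat_mult)
  have c2r: "real (c2 r n) = m * (real n * (real n - 1)) / (C * C')"
    using e2 C0 nn by (simp add: eq_divide_eq mult.assoc)
  have SX: "(\<Sum>M\<in>Ms. X M) = m * \<mu>"
  proof -
    have "(\<Sum>M\<in>Ms. X M) = real (\<Sum>M\<in>Ms. card (M \<inter> F))" unfolding X_def by simp
    also have "\<dots> = f * real (c1 r n)" unfolding Ms_def f_def using sumX[OF r n F] by simp
    finally show ?thesis unfolding c1r \<mu>_def by simp
  qed
  have SX2: "(\<Sum>M\<in>Ms. (X M)^2) \<le> f * real (c1 r n) + f * f * real (c2 r n)"
  proof -
    have "(\<Sum>M\<in>Ms. (X M)^2) = real (\<Sum>M\<in>Ms. card (M \<inter> F) ^ 2)" unfolding X_def by simp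
    also have "\<dots> \<le> real (card F * c1 r n + card F * card F * c2 r n)"
      unfolding Ms_def using sumX2[OF r n F] by (simp only: of_nat_le_iff)
    finally show ?thesis unfolding f_def by simp
  qed
  have Vexp: "(\<Sum>M\<in>Ms. (X M - \<mu>)^2) = (\<Sum>M\<in>Ms. (X M)^2) - 2 * \<mu> * (\<Sum>M\<in>Ms. X M) + m * \<mu>^2"
  proof -
    have "(\<Sum>M\<in>Ms. (X M - \<mu>)^2) = (\<Sum>M\<in>Ms. (X M)^2 - 2 * \<mu> * X M + \<mu>^2)"
      by (simp add: power2_eq_square algebra_simps)
    also have "\<dots> = (\<Sum>M\<in>Ms. (X M)^2) - (\<Sum>M\<in>Ms. 2 * \<mu> * X M) + (\<Sum>M\<in>Ms. \<mu>^2)"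
      by (simp add: sum.distrib sum_subtractf)
    also have "\<dots> = (\<Sum>M\<in>Ms. (X M)^2) - 2 * \<mu> * (\<Sum>M\<in>Ms. X M) + m * \<mu>^2"
      by (simp add: sum_distrib_left m_def)
    finally show ?thesis .
  qed
  define \<rho> where "\<rho> = f / C"
  define D where "D = real n * (real n - 1) * C / C' - real n ^ 2"
  have \<rho>01: "0 \<le> \<rho>" "\<rho> \<le> 1" unfolding \<rho>_def using f0 fC C0 by auto
  have Vle: "(\<Sum>M\<in>Ms. (X M - \<mu>)^2) \<le> m * (\<rho> * real n + \<rho>^2 * D)"
  proof -
    have "(\<Sum>M\<in>Ms. (X M - \<mu>)^2) \<le> f * real (c1 r n) + f * f * real (c2 r n) - m * \<mu>^2"
      using Vexp SX SX2 by (simp add: power2_eq_square)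
    also have "\<dots> = m * (\<rho> * real n + \<rho>^2 * D)"
      unfolding c1r c2r \<mu>_def \<rho>_def D_def using C0 by (simp add: field_simps power2_eq_square)
    finally show ?thesis .
  qed
  have "\<rho> * real n + \<rho>^2 * D \<le> Wn r n"
  proof -
    have "\<rho> * real n \<le> real n" using \<rho>01 by (simp add: mult_left_le_one_le)
    moreover have "\<rho>^2 * D \<le> max 0 D"
    proof (cases "D \<ge> 0")
      case True
      have "\<rho>^2 \<le> 1" using \<rho>01 by (simp add: power_le_one)
      then have "\<rho>^2 * D \<le> D" using True by (simp add: mult_left_le_one_le)
      then show ?thesis by simp
    next
      case False
      then have "\<rho>^2 * D \<le> 0" by (simp add: mult_nonneg_nonpos)
      then show ?thesis by simp
    qed
    ultimately show ?thesis unfolding Wn_def D_def C_def C'_def by simp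
  qed
  then have V: "(\<Sum>M\<in>Ms. (X M - \<mu>)^2) \<le> m * Wn r n" using Vle m0
    by (meson mult_left_mono less_imp_le order_trans)
  define A where "A = {M \<in> Ms. \<delta> \<le> \<bar>X M - \<mu>\<bar>}"
  have "real (card A) * \<delta>^2 = (\<Sum>M\<in>A. \<delta>^2)" by simp
  also have "\<dots> \<le> (\<Sum>M\<in>A. (X M - \<mu>)^2)"
  proof (rule sum_mono)
    fix M assume "M \<in> A"
    then have "\<delta> \<le> \<bar>X M - \<mu>\<bar>" unfolding A_def by simp
    then have "\<delta>^2 \<le> \<bar>X M - \<mu>\<bar>^2" using dlt by (intro power_mono) auto
    then show "\<delta>^2 \<le> (X M - \<mu>)^2" by simp
  qed
  also have "\<dots> \<le> (\<Sum>M\<in>Ms. (X M - \<mu>)^2)"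
    by (rule sum_mono2[OF finMs]) (auto simp: A_def)
  also have "\<dots> \<le> m * Wn r n" by (rule V)
  finally have "real (card A) * \<delta>^2 \<le> m * Wn r n" .
  then have "real (card A) / m \<le> Wn r n / \<delta>^2" using m0 dlt
    by (simp add: field_simps)
  then show ?thesis unfolding A_def X_def \<mu>_def f_def C_def m_def Ms_def .
qed


lemma z_ge:
  assumes M: "M \<in> matchings r n" and C: "C \<subseteq> M" "is_clique P C"
  shows "card C \<le> z P M"
proof -
  have "finite {C. C \<subseteq> M \<and> is_clique P C}"
  proof (rule finite_subset)
    show "{C. C \<subseteq> M \<and> is_clique P C} \<subseteq> Pow M" by auto
    show "finite (Pow M)" using om_props(6)[OF M] by simp
  qed
  then show ?thesis unfolding z_def using C by (intro Max_ge) auto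
qed

lemma z_attained:
  assumes M: "M \<in> matchings r n"
  shows "\<exists>C. C \<subseteq> M \<and> is_clique P C \<and> z P M = card C"
proof -
  have fin: "finite {C. C \<subseteq> M \<and> is_clique P C}"
  proof (rule finite_subset)
    show "{C. C \<subseteq> M \<and> is_clique P C} \<subseteq> Pow M" by auto
    show "finite (Pow M)" using om_props(6)[OF M] by simp
  qed
  have ne: "{} \<in> {C. C \<subseteq> M \<and> is_clique P C}" unfolding is_clique_def by auto
  have "z P M \<in> card ` {C. C \<subseteq> M \<and> is_clique P C}"
    unfolding z_def using fin ne by (intro Max_in) auto
  then show ?thesis by auto
qed

lemma z_lower:
  assumes M: "M \<in> matchings r n" and r: "r \<ge> 1"
  shows "card (M \<inter> P0 r n) \<le> z (rpartite_patterns r) M"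
proof (rule z_ge[OF M])
  show "M \<inter> P0 r n \<subseteq> M" by blast
  show "is_clique (rpartite_patterns r) (M \<inter> P0 r n)"
    unfolding is_clique_def
  proof (intro ballI impI)
    fix e f assume e: "e \<in> M \<inter> P0 r n" and f: "f \<in> M \<inter> P0 r n" and ef: "e \<noteq> f"
    have "disjnt e f" using om_props(3)[OF M] e f ef pairwiseD by (metis IntD1)
    then have "e \<inter> f = {}" unfolding disjnt_def .
    then show "pattern_word e f \<in> rpartite_patterns r" using lower_key[of e r n f] e f r by blast
  qed
qed

definition cell :: "nat \<Rightarrow> nat \<Rightarrow> nat \<Rightarrow> nat" where "cell K N v = v * K div N"

definition Kset :: "nat \<Rightarrow> nat \<Rightarrow> (nat \<Rightarrow> nat) set" where
  "Kset r K = {u \<in> Pi\<^sub>E {..r} (\<lambda>_. {..K}). u 0 = 0 \<and> u r = K \<and> (\<forall>i<r. u i \<le> u (Suc i))}"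

definition Fu :: "nat \<Rightarrow> nat \<Rightarrow> nat \<Rightarrow> (nat \<Rightarrow> nat) \<Rightarrow> nat set set" where
  "Fu r n K u = {S \<in> RS r n. \<forall>i<r. u i \<le> cell K (r*n) (sl S ! i) \<and> cell K (r*n) (sl S ! i) \<le> u (Suc i)}"

lemma cell_mono: "v \<le> w \<Longrightarrow> cell K N v \<le> cell K N w"
  unfolding cell_def by (intro div_le_mono mult_le_mono1)

lemma cell_le: "v \<le> N \<Longrightarrow> cell K N v \<le> K"
proof -
  assume "v \<le> N"
  then have "cell K N v \<le> cell K N N" by (rule cell_mono)
  also have "\<dots> \<le> K" unfolding cell_def by (cases "N = 0") auto
  finally show ?thesis .
qed

lemma Kset_finite: "finite (Kset r K)"
  unfolding Kset_def by (rule finite_subset[of _ "Pi\<^sub>E {..r} (\<lambda>_. {..K})"]) (auto intro: finite_PiE)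

lemma sl_mem:
  assumes "finite S" "i < card S" shows "sl S ! i \<in> S"
  using assms nth_mem[of i "sl S"] by simp

lemma clique_thresholds:
  assumes M: "M \<in> matchings r n" and r: "r \<ge> 2" and C: "C \<subseteq> M" "is_clique (rpartite_patterns r) C"
  shows "\<exists>u\<in>Kset r K. C \<subseteq> Fu r n K u"
proof (cases "C = {}")
  case True
  define u where "u = restrict (\<lambda>i. if i = r then K else 0) {..r}"
  have "u \<in> Kset r K" unfolding Kset_def u_def using r by (auto simp: restrict_PiE_iff)
  then show ?thesis using True by blast
next
  case False
  define N where "N = r * n"
  have CRS: "C \<subseteq> RS r n" using C om_props(5)[OF M] by blast
  have finC: "finite C" using C om_props(6)[OF M] finite_subset by blast
  have fe: "finite e" "card e = r" "e \<subseteq> {0..<N}" if "e \<in> C" for e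
    using CRS that unfolding RS_def N_def by (auto intro: finite_subset)
  have vN: "sl e ! i < N" if "e \<in> C" "i < r" for e i
    using sl_mem[of e i] fe[OF that(1)] that by auto
  define a where "a i = Max ((\<lambda>e. sl e ! i) ` C)" for i
  have a_ge: "sl e ! i \<le> a i" if "e \<in> C" for e i
    unfolding a_def using finC that by (intro Max_ge) auto
  have a_in: "\<exists>e\<in>C. a i = sl e ! i" for i
  proof -
    have "a i \<in> (\<lambda>e. sl e ! i) ` C" unfolding a_def using finC False by (intro Max_in) auto
    then show ?thesis by auto
  qed
  have a_lt: "a i < sl f ! Suc i" if "f \<in> C" "Suc i < r" for f i
  proof -
    obtain e where e: "e \<in> C" "a i = sl e ! i" using a_in by blast
    show ?thesis
    proof (cases "e = f")
      case True
      then show ?thesis using e sl_less_iff[of f i "Suc i"] fe[OF that(1)] that by simp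
    next
      case False
      have "disjnt e f" using om_props(3)[OF M] e(1) that(1) False C(1) pairwiseD by (metis subsetD)
      then have d: "e \<inter> f = {}" unfolding disjnt_def .
      have "pattern_word e f \<in> rpartite_patterns r" using C(2) e(1) that(1) False unfolding is_clique_def by blast
      then show ?thesis using upper_key[of e f r i] fe[OF e(1)] fe[OF that(1)] d that e by simp
    qed
  qed
  define g where "g i = (if i = 0 then 0 else if i = r then K else cell K N (a (i - 1)))" for i
  define u where "u = restrict g {..r}"
  have aN: "a i < N" if "i < r" for i
    using a_in[of i] vN that by metis
  have gK: "g i \<le> K" if "i \<le> r" for i
  proof (cases "i = 0 \<or> i = r")
    case True then show ?thesis unfolding g_def by auto
  next
    case False
    then have "i - 1 < r" using that by linarith
    then have "a (i - 1) \<le> N" using aN less_imp_le by blast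
    then show ?thesis unfolding g_def using False by (simp add: cell_le)
  qed
  have "u \<in> Kset r K"
  proof -
    have "u \<in> Pi\<^sub>E {..r} (\<lambda>_. {..K})" unfolding u_def using gK by (auto simp: restrict_PiE_iff)
    moreover have "u 0 = 0" "u r = K" unfolding u_def g_def using r by auto
    moreover have "u i \<le> u (Suc i)" if i: "i < r" for i
    proof -
      have "g i \<le> g (Suc i)"
      proof (cases "i = 0")
        case True then show ?thesis by (simp add: g_def)
      next
        case i0: False
        show ?thesis
        proof (cases "Suc i = r")
          case True then show ?thesis using gK[of i] g_def i by simp
        next
          case False
          obtain f where f: "f \<in> C" using \<open>C \<noteq> {}\<close> by blast
          have "a (i - 1) < sl f ! i" using a_lt[OF f, of "i - 1"] i i0 by simp
          also have "\<dots> \<le> a i" using a_ge[OF f] .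
          finally have "cell K N (a (i - 1)) \<le> cell K N (a i)" by (intro cell_mono) simp
          then show ?thesis using i0 False i unfolding g_def by simp
        qed
      qed
      then show ?thesis unfolding u_def using i by simp
    qed
    ultimately show ?thesis unfolding Kset_def by blast
  qed
  moreover have "C \<subseteq> Fu r n K u"
  proof
    fix e assume e: "e \<in> C"
    have "u i \<le> cell K N (sl e ! i) \<and> cell K N (sl e ! i) \<le> u (Suc i)" if i: "i < r" for i
    proof
      show "u i \<le> cell K N (sl e ! i)"
      proof (cases "i = 0")
        case True then show ?thesis unfolding u_def g_def by simp
      next
        case False
        have "a (i - 1) < sl e ! i" using a_lt[OF e, of "i - 1"] i False by simp
        then have "cell K N (a (i - 1)) \<le> cell K N (sl e ! i)" by (intro cell_mono) simp
        then show ?thesis unfolding u_def g_def using i False by simp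
      qed
      show "cell K N (sl e ! i) \<le> u (Suc i)"
      proof (cases "Suc i = r")
        case True
        have "cell K N (sl e ! i) \<le> K" using vN[OF e i] by (intro cell_le) simp
        then show ?thesis unfolding u_def g_def using True by simp
      next
        case False
        have "cell K N (sl e ! i) \<le> cell K N (a i)" using a_ge[OF e] by (rule cell_mono)
        then show ?thesis unfolding u_def g_def using False i by simp
      qed
    qed
    then show "e \<in> Fu r n K u" unfolding Fu_def N_def using CRS e by blast
  qed
  ultimately show ?thesis by blast
qed

lemma z_upper:
  assumes M: "M \<in> matchings r n" and r: "r \<ge> 2"
  shows "\<exists>u\<in>Kset r K. z (rpartite_patterns r) M \<le> card (M \<inter> Fu r n K u)"
proof -
  obtain C where C: "C \<subseteq> M" "is_clique (rpartite_patterns r) C" "z (rpartite_patterns r) M = card C"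
    using z_attained[OF M] by blast
  obtain u where u: "u \<in> Kset r K" "C \<subseteq> Fu r n K u" using clique_thresholds[OF M r C(1,2)] by blast
  have "card C \<le> card (M \<inter> Fu r n K u)"
    using C(1) u(2) om_props(6)[OF M] by (intro card_mono) auto
  then show ?thesis using u(1) C(3) by auto
qed


lemma blk_div: assumes "x \<in> blk n i" shows "x div n = i"
proof -
  have "n * i \<le> x" "x < n * Suc i" using assms unfolding blk_def by (auto simp: mult.commute)
  then show ?thesis by (rule div_nat_eqI)
qed

lemma card_P0: assumes n: "n \<ge> 1" shows "n ^ r \<le> card (P0 r n)"
proof -
  define PP where "PP = Pi\<^sub>E {..<r} (blk n)"
  define \<phi> where "\<phi> g = g ` {..<r}" for g :: "nat \<Rightarrow> nat"
  have blkr: "blk n i \<subseteq> {0..<r*n}" if "i < r" for i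
  proof -
    have "Suc i * n \<le> r * n" using that by (intro mult_le_mono1) simp
    then show ?thesis unfolding blk_def by auto
  qed
  have inter: "\<phi> g \<inter> blk n i = {g i}" if g: "g \<in> PP" and i: "i < r" for g i
  proof
    show "\<phi> g \<inter> blk n i \<subseteq> {g i}"
    proof
      fix x assume "x \<in> \<phi> g \<inter> blk n i"
      then obtain j where j: "j < r" "x = g j" "x \<in> blk n i" unfolding \<phi>_def by auto
      have "g j \<in> blk n j" using g j(1) unfolding PP_def by auto
      then have "j = i" using blk_div[of x n i] blk_div[of "g j" n j] j by simp
      then show "x \<in> {g i}" using j by simp
    qed
    show "{g i} \<subseteq> \<phi> g \<inter> blk n i" using g i unfolding PP_def \<phi>_def by auto
  qed
  have injg: "inj_on g {..<r}" if g: "g \<in> PP" for g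
  proof (rule inj_onI)
    fix i j assume ij: "i \<in> {..<r}" "j \<in> {..<r}" "g i = g j"
    have "g i \<in> blk n i" "g j \<in> blk n j" using g ij(1,2) unfolding PP_def by auto
    then have "g i div n = i" "g j div n = j" using blk_div by blast+
    then show "i = j" using ij(3) by metis
  qed
  have into: "\<phi> g \<in> P0 r n" if g: "g \<in> PP" for g
  proof -
    have "\<phi> g \<subseteq> {0..<r*n}"
    proof
      fix x assume "x \<in> \<phi> g"
      then obtain i where i: "i < r" "x = g i" unfolding \<phi>_def by auto
      then have "x \<in> blk n i" using g unfolding PP_def by auto
      then show "x \<in> {0..<r*n}" using blkr i(1) by blast
    qed
    moreover have "card (\<phi> g) = r" unfolding \<phi>_def using card_image[OF injg[OF g]] by simp
    moreover have "\<forall>i<r. card (\<phi> g \<inter> blk n i) = 1" using inter[OF g] by simp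
    ultimately show ?thesis unfolding P0_def by blast
  qed
  have inj: "inj_on \<phi> PP"
  proof (rule inj_onI)
    fix g h assume g: "g \<in> PP" and h: "h \<in> PP" and e: "\<phi> g = \<phi> h"
    show "g = h"
    proof (rule PiE_ext[OF g[unfolded PP_def] h[unfolded PP_def]])
      fix i assume "i \<in> {..<r}"
      then have "{g i} = {h i}" using inter[OF g, of i] inter[OF h, of i] e by simp
      then show "g i = h i" by simp
    qed
  qed
  have finP0: "finite (P0 r n)"
    unfolding P0_def by (rule finite_subset[of _ "Pow {0..<r*n}"]) auto
  have "card PP \<le> card (P0 r n)"
    using card_inj_on_le[OF inj _ finP0] into by blast
  moreover have "card PP = n ^ r"
    unfolding PP_def by (simp add: card_PiE blk_def)
  ultimately show ?thesis by simp
qed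

lemma real_div_ge: "real x / real K - 1 \<le> real (x div K)" if "K > 0"
proof -
  have "x = x div K * K + x mod K" by simp
  then have "real x = real (x div K) * real K + real (x mod K)" by (metis of_nat_add of_nat_mult)
  moreover have "real (x mod K) < real K" using that by simp
  ultimately have "real x < (real (x div K) + 1) * real K" by (simp add: algebra_simps)
  then have "real x / real K < real (x div K) + 1" using that by (simp add: divide_less_eq)
  then show ?thesis by simp
qed

lemma card_J:
  assumes K: "K \<ge> 1" and N: "N > 0" and lh: "lo \<le> hi"
  shows "real (card {v. v < N \<and> lo \<le> cell K N v \<and> cell K N v \<le> hi})
           \<le> (real hi - real lo + 1) * real N / real K + 2"
proof -
  define a where "a = lo * N div K"
  define b where "b = (hi + 1) * N div K + 1"
  have sub: "{v. v < N \<and> lo \<le> cell K N v \<and> cell K N v \<le> hi} \<subseteq> {a..<b}"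
  proof
    fix v assume v: "v \<in> {v. v < N \<and> lo \<le> cell K N v \<and> cell K N v \<le> hi}"
    have "lo * N \<le> (v * K div N) * N" using v unfolding cell_def by (intro mult_le_mono1) simp
    also have "\<dots> \<le> v * K" by (metis div_mult_mod_eq le_add1)
    finally have "lo * N div K \<le> v * K div K" by (rule div_le_mono)
    then have av: "a \<le> v" unfolding a_def using K by simp
    have "v * K < (v * K div N + 1) * N" using N
      by (metis add.commute div_mult_mod_eq mod_less_divisor mult_Suc add_less_cancel_left plus_1_eq_Suc)
    also have "\<dots> \<le> (hi + 1) * N" using v unfolding cell_def by (intro mult_le_mono1) simp
    finally have "v * K div K \<le> (hi + 1) * N div K" by (intro div_le_mono) simp
    then have "v < b" unfolding b_def using K by simp
    then show "v \<in> {a..<b}" using av by simp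
  qed
  have "card {v. v < N \<and> lo \<le> cell K N v \<and> cell K N v \<le> hi} \<le> card {a..<b}"
    by (rule card_mono[OF _ sub]) simp
  then have c: "real (card {v. v < N \<and> lo \<le> cell K N v \<and> cell K N v \<le> hi}) \<le> real (b - a)" by simp
  have Kp: "real K > 0" using K by simp
  have "real ((hi+1)*N div K) \<le> real ((hi+1)*N) / real K" by (rule of_nat_div_le_of_nat)
  moreover have "real ((hi+1)*N) = (real hi + 1) * real N" by (simp add: algebra_simps)
  ultimately have hb: "real b \<le> (real hi + 1) * real N / real K + 1"
    unfolding b_def by (simp only: of_nat_add of_nat_1)
  have ha: "real lo * real N / real K - 1 \<le> real a"
    using real_div_ge[of K "lo * N"] K unfolding a_def by simp
  have pos: "0 \<le> (real hi - real lo + 1) * real N / real K + 2"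
    using lh Kp by (intro add_nonneg_nonneg divide_nonneg_nonneg mult_nonneg_nonneg) auto
  have "real (b - a) \<le> (real hi - real lo + 1) * real N / real K + 2"
  proof (cases "a \<le> b")
    case True
    then have "real (b - a) = real b - real a" by simp
    also have "\<dots> \<le> (real hi + 1) * real N / real K + 1 - (real lo * real N / real K - 1)"
      using ha hb by linarith
    also have "\<dots> = (real hi - real lo + 1) * real N / real K + 2" using Kp by (simp add: field_simps)
    finally show ?thesis .
  next
    case False then show ?thesis using pos by simp
  qed
  then show ?thesis using c by linarith
qed

lemma card_Fu:
  assumes u: "u \<in> Kset r K"
  shows "card (Fu r n K u) \<le> (\<Prod>i<r. card {v. v < r*n \<and> u i \<le> cell K (r*n) v \<and> cell K (r*n) v \<le> u (Suc i)})"
proof -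
  define J where "J i = {v. v < r*n \<and> u i \<le> cell K (r*n) v \<and> cell K (r*n) v \<le> u (Suc i)}" for i
  define \<psi> where "\<psi> S = restrict (\<lambda>i. sl S ! i) {..<r}" for S
  have into: "\<psi> S \<in> Pi\<^sub>E {..<r} J" if S: "S \<in> Fu r n K u" for S
  proof -
    have SR: "S \<subseteq> {0..<r*n}" "card S = r" using S unfolding Fu_def RS_def by auto
    have fS: "finite S" using SR(1) finite_subset by blast
    have "sl S ! i < r * n" if "i < r" for i using sl_mem[OF fS, of i] SR that by auto
    then show ?thesis using S unfolding \<psi>_def J_def Fu_def by (auto simp: restrict_PiE_iff)
  qed
  have inj: "inj_on \<psi> (Fu r n K u)"
  proof (rule inj_onI)
    fix S T assume S: "S \<in> Fu r n K u" and T: "T \<in> Fu r n K u" and e: "\<psi> S = \<psi> T"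
    have SR: "S \<subseteq> {0..<r*n}" "card S = r" "T \<subseteq> {0..<r*n}" "card T = r"
      using S T unfolding Fu_def RS_def by auto
    have fS: "finite S" "finite T" using SR finite_subset by blast+
    have "sl S ! i = sl T ! i" if "i < r" for i
      using fun_cong[OF e, of i] that unfolding \<psi>_def by simp
    then have "sl S = sl T" using SR fS by (intro nth_equalityI) auto
    then show "S = T" using fS by (metis set_sorted_list_of_set)
  qed
  have finJ: "finite (Pi\<^sub>E {..<r} J)" unfolding J_def by (intro finite_PiE) auto
  have "card (Fu r n K u) \<le> card (Pi\<^sub>E {..<r} J)"
    using card_inj_on_le[OF inj _ finJ] into by blast
  also have "\<dots> = (\<Prod>i<r. card (J i))" by (simp add: card_PiE)
  finally show ?thesis unfolding J_def .
qed


lemma amgm: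
  fixes d :: "nat \<Rightarrow> real"
  assumes r: "r \<ge> 1" and d: "\<And>i. i < r \<Longrightarrow> d i \<ge> 0"
  shows "(\<Prod>i<r. d i) \<le> ((\<Sum>i<r. d i) / real r) ^ r"
proof (cases "(\<Sum>i<r. d i) = 0")
  case True
  then have "\<forall>i\<in>{..<r}. d i = 0" using d by (subst sum_nonneg_eq_0_iff[symmetric]) auto
  then have "d 0 = 0" using r by auto
  then have "(\<Prod>i<r. d i) = 0" using r by (intro prod_zero) auto
  moreover have "((\<Sum>i<r. d i) / real r) ^ r = 0" using True r by simp
  ultimately show ?thesis by (metis order_refl)
next
  case False
  define s where "s = (\<Sum>i<r. d i)"
  have s0: "s > 0" using False d unfolding s_def by (metis lessThan_iff order_le_less sum_nonneg)
  define t where "t = s / real r"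
  have t0: "t > 0" using s0 r unfolding t_def by simp
  have "(\<Prod>i<r. d i / t) \<le> (\<Prod>i<r. exp (d i / t - 1))"
  proof (rule prod_mono)
    fix i assume "i \<in> {..<r}"
    then have "0 \<le> d i / t" using d t0 by simp
    moreover have "d i / t \<le> exp (d i / t - 1)" using exp_ge_add_one_self[of "d i / t - 1"] by simp
    ultimately show "0 \<le> d i / t \<and> d i / t \<le> exp (d i / t - 1)" by simp
  qed
  also have "\<dots> = exp (\<Sum>i<r. d i / t - 1)" by (simp add: exp_sum)
  also have "(\<Sum>i<r. d i / t - 1) = s / t - real r"
    unfolding s_def by (simp add: sum_subtractf sum_divide_distrib)
  also have "s / t - real r = 0" unfolding t_def using r s0 by simp
  finally have "(\<Prod>i<r. d i / t) \<le> 1" by simp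
  moreover have "(\<Prod>i<r. d i / t) = (\<Prod>i<r. d i) / t ^ r" by (simp add: prod_dividef)
  ultimately have "(\<Prod>i<r. d i) \<le> t ^ r" using t0 by (simp add: divide_le_eq)
  then show ?thesis unfolding t_def s_def .
qed

lemma lin_ratio:
  fixes a b c e :: real
  assumes c: "c \<noteq> 0"
  shows "(\<lambda>n. (a * real n + b) / (c * real n + e)) \<longlonglongrightarrow> a / c"
proof -
  have "(\<lambda>n. (a + b / real n) / (c + e / real n)) \<longlonglongrightarrow> (a + 0) / (c + 0)"
    using c by (intro tendsto_intros) auto
  moreover have "eventually (\<lambda>n. (a + b / real n) / (c + e / real n) = (a * real n + b) / (c * real n + e)) sequentially"
    using eventually_gt_at_top[of 0]
  proof eventually_elim
    case (elim n)
    then have n0: "real n > 0" by simp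
    have 1: "a + b / real n = (a * real n + b) / real n" "c + e / real n = (c * real n + e) / real n"
      using n0 by (simp_all add: field_simps)
    have 2: "(x / real n) / (y / real n) = x / y" for x y
    proof -
      have "(x / real n) / (y / real n) = (x / real n * real n) / y" by (simp only: divide_divide_eq_right)
      also have "x / real n * real n = x" using n0 by simp
      finally show ?thesis .
    qed
    show ?case unfolding 1 2 ..
  qed
  ultimately show ?thesis by (auto intro: Lim_transform_eventually)
qed

lemma Cb_prod: "Cb r n * fact r = (\<Prod>i<r. real (r*n) - real i)"
  unfolding Cb_def binomial_gbinomial using gbinomial_mult_fact'[of "real (r*n)" r]
  by (simp add: lessThan_atLeast0)

lemma Cb'_prod: assumes "n \<ge> 1" shows "Cb' r n * fact r = (\<Prod>i<r. real (r*n) - real r - real i)"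
proof -
  have "r \<le> r * n" using assms by simp
  then have "real (r*n - r) = real (r*n) - real r" by (simp add: of_nat_diff)
  then show ?thesis
    unfolding Cb'_def binomial_gbinomial using gbinomial_mult_fact'[of "real (r*n - r)" r]
    by (simp add: lessThan_atLeast0)
qed

lemma ratio_prod:
  fixes g :: "nat \<Rightarrow> nat \<Rightarrow> real"
  shows "(\<Prod>i<r. g i n) / Cb r n = fact r * (\<Prod>i<r. g i n / (real r * real n - real i))"
proof -
  have fr: "fact r \<noteq> (0::real)" by simp
  have "Cb r n = (\<Prod>i<r. real (r*n) - real i) / fact r" using Cb_prod[of r n] fr
    by (simp add: eq_divide_eq)
  then show ?thesis by (simp add: prod_dividef)
qed

lemma lim_K2:
  assumes r: "r \<ge> 1"
  shows "(\<lambda>n. real n ^ r / Cb r n) \<longlonglongrightarrow> fact r / real r ^ r"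
proof -
  have L: "(\<lambda>n. fact r * (\<Prod>i<r. (1 * real n + 0) / (real r * real n + - real i))) \<longlonglongrightarrow> fact r * (\<Prod>i<r. 1 / real r)"
    using r by (intro tendsto_intros lin_ratio) auto
  have eq: "(\<lambda>n. fact r * (\<Prod>i<r. (1 * real n + 0) / (real r * real n + - real i))) = (\<lambda>n. real n ^ r / Cb r n)"
  proof
    fix n
    show "fact r * (\<Prod>i<r. (1 * real n + 0) / (real r * real n + - real i)) = real n ^ r / Cb r n"
      using ratio_prod[where g="\<lambda>i n. real n" and r=r and n=n] by simp
  qed
  have eq2: "fact r * (\<Prod>i<r. 1 / real r) = (fact r / real r ^ r :: real)" by (simp add: power_one_over)
  from L show ?thesis unfolding eq eq2 .
qed

lemma lim_K3:
  fixes d :: "nat \<Rightarrow> real"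
  assumes r: "r \<ge> 1" and K: "K > 0"
  shows "(\<lambda>n. (\<Prod>i<r. d i * real (r*n) / real K + 2) / Cb r n) \<longlonglongrightarrow> fact r * (\<Prod>i<r. d i / real K)"
proof -
  have "(\<lambda>n. fact r * (\<Prod>i<r. ((d i * real r / real K) * real n + 2) / (real r * real n + - real i)))
          \<longlonglongrightarrow> fact r * (\<Prod>i<r. (d i * real r / real K) / real r)"
    using r by (intro tendsto_intros lin_ratio) auto
  moreover have "(\<lambda>n. fact r * (\<Prod>i<r. ((d i * real r / real K) * real n + 2) / (real r * real n + - real i)))
     = (\<lambda>n. (\<Prod>i<r. d i * real (r*n) / real K + 2) / Cb r n)"
  proof
    fix n
    show "fact r * (\<Prod>i<r. ((d i * real r / real K) * real n + 2) / (real r * real n + - real i))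
       = (\<Prod>i<r. d i * real (r*n) / real K + 2) / Cb r n"
      using ratio_prod[where g="\<lambda>i n. d i * real (r*n) / real K + 2" and r=r and n=n] by (simp add: mult_ac)
  qed
  moreover have "(\<Prod>i<r. (d i * real r / real K) / real r) = (\<Prod>i<r. d i / real K)"
    using r by (intro prod.cong) auto
  ultimately show ?thesis by metis
qed

lemma lim_CC':
  assumes r: "r \<ge> 1"
  shows "(\<lambda>n. Cb r n / Cb' r n) \<longlonglongrightarrow> 1"
proof -
  have "(\<lambda>n. \<Prod>i<r. (real r * real n + - real i) / (real r * real n + (- real r - real i))) \<longlonglongrightarrow> (\<Prod>i<r. real r / real r)"
    using r by (intro tendsto_intros lin_ratio) auto
  moreover have "(\<Prod>i<r. real r / real r) = (1::real)" using r by simp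
  moreover have "eventually (\<lambda>n. (\<Prod>i<r. (real r * real n + - real i) / (real r * real n + (- real r - real i)))
        = Cb r n / Cb' r n) sequentially"
    using eventually_ge_at_top[of 1]
  proof eventually_elim
    case (elim n)
    have fr: "fact r \<noteq> (0::real)" by simp
    have "Cb r n / Cb' r n = (Cb r n * fact r) / (Cb' r n * fact r)" using fr by simp
    also have "\<dots> = (\<Prod>i<r. real (r*n) - real i) / (\<Prod>i<r. real (r*n) - real r - real i)"
      using Cb_prod[of r n] Cb'_prod[OF elim, of r] by simp
    finally show ?case by (simp add: prod_dividef algebra_simps)
  qed
  ultimately show ?thesis by (auto intro: Lim_transform_eventually)
qed

lemma lim_K1:
  assumes r: "r \<ge> 1"
  shows "(\<lambda>n. Wn r n / real n ^ 2) \<longlonglongrightarrow> 0"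
proof -
  have "(\<lambda>n. 1 / real n + max 0 (((1 * real n + - 1) / (1 * real n + 0)) * (Cb r n / Cb' r n) - 1)) \<longlonglongrightarrow>
        0 + max 0 ((1 / 1) * 1 - 1)"
    by (intro tendsto_intros lin_ratio lim_CC'[OF r]) auto
  moreover have "eventually (\<lambda>n. 1 / real n + max 0 (((1 * real n + - 1) / (1 * real n + 0)) * (Cb r n / Cb' r n) - 1)
      = Wn r n / real n ^ 2) sequentially"
    using eventually_ge_at_top[of 2]
  proof eventually_elim
    case (elim n)
    then have n0: "real n > 0" by simp
    define D where "D = real n * (real n - 1) * Cb r n / Cb' r n - real n ^ 2"
    have p: "real n ^ 2 > 0" using n0 by simp
    have "max 0 D / real n ^ 2 = max 0 (D / real n ^ 2)"
    proof (cases "D \<ge> 0")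
      case True
      then have "D / real n ^ 2 \<ge> 0" using p by simp
      then show ?thesis using True by simp
    next
      case False
      then have "D / real n ^ 2 < 0" using p by (simp add: divide_neg_pos)
      then show ?thesis using False by simp
    qed
    moreover have "D / real n ^ 2 = ((1 * real n + - 1) / (1 * real n + 0)) * (Cb r n / Cb' r n) - 1"
      unfolding D_def using n0 Cb_pos[OF r elim] by (simp add: field_simps power2_eq_square)
    ultimately show ?case unfolding Wn_def D_def[symmetric] using n0
      by (simp add: add_divide_distrib power2_eq_square)
  qed
  ultimately show ?thesis by (auto intro: Lim_transform_eventually)
qed


lemma prob_bound:
  fixes c \<epsilon> :: real
  assumes r: "r \<ge> 2" and n: "n \<ge> 2" and eps: "\<epsilon> > 0"
    and hu: "\<forall>u\<in>Kset r K. real (card (Fu r n K u)) / Cb r n < c + \<epsilon>/2"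
    and hl: "real n ^ r / Cb r n > c - \<epsilon>/2"
  shows "measure_pmf.prob (pmf_of_set (matchings r n))
            {M. \<bar>real (z (rpartite_patterns r) M) / real n - c\<bar> > \<epsilon>}
         \<le> (1 + real (card (Kset r K))) * (Wn r n / (\<epsilon> * real n / 2)^2)"
proof -
  have r1: "r \<ge> 1" using r by simp
  define Ms where "Ms = matchings r n"
  define E where "E = {M. \<bar>real (z (rpartite_patterns r) M) / real n - c\<bar> > \<epsilon>}"
  define \<delta> where "\<delta> = \<epsilon> * real n / 2"
  define W where "W = Wn r n"
  have d0: "\<delta> > 0" unfolding \<delta>_def using eps n by simp
  have ne: "Ms \<noteq> {}" and fin: "finite Ms" unfolding Ms_def using Ms_nonempty[OF r1] Ms_finite by auto
  have m0: "real (card Ms) > 0" using ne fin by (simp add: card_gt_0_iff)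
  have Cp: "Cb r n > 0" using Cb_pos[OF r1 n] by simp
  have np: "real n > 0" using n by simp
  define A0 where "A0 = {M \<in> Ms. \<delta> \<le> \<bar>real (card (M \<inter> P0 r n)) - real (card (P0 r n)) * real n / Cb r n\<bar>}"
  define Au where "Au u = {M \<in> Ms. \<delta> \<le> \<bar>real (card (M \<inter> Fu r n K u)) - real (card (Fu r n K u)) * real n / Cb r n\<bar>}" for u
  have sub: "Ms \<inter> E \<subseteq> A0 \<union> (\<Union>u\<in>Kset r K. Au u)"
  proof
    fix M assume ME: "M \<in> Ms \<inter> E"
    then have M: "M \<in> matchings r n" unfolding Ms_def by simp
    define Z where "Z = real (z (rpartite_patterns r) M)"
    have "\<bar>Z / real n - c\<bar> > \<epsilon>" using ME unfolding E_def Z_def by simp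
    then have "Z / real n < c - \<epsilon> \<or> Z / real n > c + \<epsilon>" by linarith
    then show "M \<in> A0 \<union> (\<Union>u\<in>Kset r K. Au u)"
    proof
      assume lo: "Z / real n < c - \<epsilon>"
      have X0: "real (card (M \<inter> P0 r n)) \<le> Z" unfolding Z_def using z_lower[OF M r1] by simp
      have "real n ^ r \<le> real (card (P0 r n))" using card_P0[of n r] n by (metis of_nat_le_iff of_nat_power one_le_numeral order_trans)
      then have "real n ^ r / Cb r n \<le> real (card (P0 r n)) / Cb r n" using Cp by (simp add: divide_right_mono)
      then have "c - \<epsilon>/2 < real (card (P0 r n)) / Cb r n" using hl by linarith
      then have "(c - \<epsilon>/2) * real n < (real (card (P0 r n)) / Cb r n) * real n"
        using np by (rule mult_strict_right_mono)
      then have mu: "(c - \<epsilon>/2) * real n < real (card (P0 r n)) * real n / Cb r n" by simp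
      have "Z < (c - \<epsilon>) * real n" using lo np by (simp add: divide_less_eq)
      then have e1: "Z < c * real n - \<epsilon> * real n" by (simp add: algebra_simps)
      have e2: "c * real n - \<epsilon> * real n / 2 < real (card (P0 r n)) * real n / Cb r n"
        using mu by (simp add: algebra_simps)
      have "\<delta> \<le> real (card (P0 r n)) * real n / Cb r n - real (card (M \<inter> P0 r n))"
        using e1 e2 X0 unfolding \<delta>_def by linarith
      then have "\<delta> \<le> \<bar>real (card (M \<inter> P0 r n)) - real (card (P0 r n)) * real n / Cb r n\<bar>"
        by linarith
      then show ?thesis using ME unfolding A0_def by blast
    next
      assume hi: "Z / real n > c + \<epsilon>"
      obtain u where u: "u \<in> Kset r K" "z (rpartite_patterns r) M \<le> card (M \<inter> Fu r n K u)"
        using z_upper[OF M r] by blast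
      have Xu: "Z \<le> real (card (M \<inter> Fu r n K u))" unfolding Z_def using u(2) by simp
      have "real (card (Fu r n K u)) / Cb r n < c + \<epsilon>/2" using hu u(1) by blast
      then have "(real (card (Fu r n K u)) / Cb r n) * real n < (c + \<epsilon>/2) * real n"
        using np by (rule mult_strict_right_mono)
      then have mu: "real (card (Fu r n K u)) * real n / Cb r n < (c + \<epsilon>/2) * real n" by simp
      have "Z > (c + \<epsilon>) * real n" using hi np by (simp add: less_divide_eq)
      then have e1: "Z > c * real n + \<epsilon> * real n" by (simp add: algebra_simps)
      have e2: "real (card (Fu r n K u)) * real n / Cb r n < c * real n + \<epsilon> * real n / 2"
        using mu by (simp add: algebra_simps)
      have "\<delta> \<le> real (card (M \<inter> Fu r n K u)) - real (card (Fu r n K u)) * real n / Cb r n"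
        using e1 e2 Xu unfolding \<delta>_def by linarith
      then have "\<delta> \<le> \<bar>real (card (M \<inter> Fu r n K u)) - real (card (Fu r n K u)) * real n / Cb r n\<bar>"
        by linarith
      then show ?thesis using ME u(1) unfolding Au_def by blast
    qed
  qed
  have finA: "finite A0" "\<And>u. finite (Au u)" using fin unfolding A0_def Au_def by auto
  have "card (Ms \<inter> E) \<le> card (A0 \<union> (\<Union>u\<in>Kset r K. Au u))"
    using finA Kset_finite by (intro card_mono[OF _ sub]) auto
  also have "\<dots> \<le> card A0 + card (\<Union>u\<in>Kset r K. Au u)" by (rule card_Un_le)
  also have "card (\<Union>u\<in>Kset r K. Au u) \<le> (\<Sum>u\<in>Kset r K. card (Au u))" by (rule card_UN_le[OF Kset_finite])
  finally have cE: "real (card (Ms \<inter> E)) \<le> real (card A0) + (\<Sum>u\<in>Kset r K. real (card (Au u)))"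
    by (metis add_le_cancel_left of_nat_add of_nat_le_iff of_nat_sum)
  have P0RS: "P0 r n \<subseteq> RS r n" unfolding P0_def RS_def by auto
  have FuRS: "Fu r n K u \<subseteq> RS r n" for u unfolding Fu_def by auto
  have b0: "real (card A0) / real (card Ms) \<le> W / \<delta>^2"
    using cheb[OF r1 n P0RS d0] unfolding A0_def Ms_def W_def .
  have bu: "real (card (Au u)) / real (card Ms) \<le> W / \<delta>^2" for u
    using cheb[OF r1 n FuRS d0] unfolding Au_def Ms_def W_def .
  have "measure_pmf.prob (pmf_of_set Ms) E = real (card (Ms \<inter> E)) / real (card Ms)"
    by (rule measure_pmf_of_set[OF ne fin])
  also have "\<dots> \<le> (real (card A0) + (\<Sum>u\<in>Kset r K. real (card (Au u)))) / real (card Ms)"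
    using cE m0 by (simp add: divide_right_mono)
  also have "\<dots> = real (card A0) / real (card Ms) + (\<Sum>u\<in>Kset r K. real (card (Au u)) / real (card Ms))"
    by (simp add: add_divide_distrib sum_divide_distrib)
  also have "\<dots> \<le> W / \<delta>^2 + (\<Sum>u\<in>Kset r K. W / \<delta>^2)"
    using b0 bu by (intro add_mono sum_mono) auto
  also have "\<dots> = (1 + real (card (Kset r K))) * (W / \<delta>^2)" by (simp add: algebra_simps add_divide_distrib)
  finally show ?thesis unfolding Ms_def E_def W_def \<delta>_def .
qed


lemma u_bound:
  fixes c \<epsilon> :: real
  assumes r: "r \<ge> 2" and K: "K \<ge> 1" and u: "u \<in> Kset r K"
    and c: "c = fact r / real r ^ r" and Kb: "c * (1 + real r / real K) ^ r < c + \<epsilon>/2"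
  shows "eventually (\<lambda>n. real (card (Fu r n K u)) / Cb r n < c + \<epsilon>/2) sequentially"
proof -
  have r1: "r \<ge> 1" using r by simp
  have Kp: "real K > 0" using K by simp
  have rp: "real r > 0" using r by simp
  define d where "d i = real (u (Suc i)) - real (u i) + 1" for i
  have mono: "u i \<le> u (Suc i)" if "i < r" for i using u that unfolding Kset_def by auto
  have u0: "u 0 = 0" "u r = K" using u unfolding Kset_def by auto
  have d0: "d i \<ge> 0" if "i < r" for i using mono[OF that] unfolding d_def by simp
  have sumd: "(\<Sum>i<r. d i) = real K + real r"
  proof -
    have "(\<Sum>i<r. d i) = (\<Sum>i<r. real (u (Suc i)) - real (u i)) + (\<Sum>i<r. 1)"
      unfolding d_def by (simp add: sum.distrib)
    also have "(\<Sum>i<r. real (u (Suc i)) - real (u i)) = real (u r) - real (u 0)"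
      by (rule sum_lessThan_telescope)
    finally show ?thesis using u0 by simp
  qed
  have "fact r * (\<Prod>i<r. d i / real K) = fact r * ((\<Prod>i<r. d i) / real K ^ r)"
    by (simp add: prod_dividef)
  also have "\<dots> \<le> fact r * ((((real K + real r) / real r) ^ r) / real K ^ r)"
    using amgm[of r d, OF r1 d0] sumd Kp by (intro mult_left_mono divide_right_mono) auto
  also have "\<dots> = c * (1 + real r / real K) ^ r"
  proof -
    have "((real K + real r) / real r) / real K = (1 + real r / real K) / real r"
      using Kp rp by (simp add: field_simps)
    then have "(((real K + real r) / real r) ^ r) / real K ^ r = (1 + real r / real K) ^ r / real r ^ r"
      by (metis power_divide)
    then show ?thesis unfolding c by simp
  qed
  finally have lt: "fact r * (\<Prod>i<r. d i / real K) < c + \<epsilon>/2" using Kb by linarith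
  have ev1: "eventually (\<lambda>n. (\<Prod>i<r. d i * real (r*n) / real K + 2) / Cb r n < c + \<epsilon>/2) sequentially"
    using lim_K3[OF r1, of K d] K lt by (intro order_tendstoD(2)) auto
  have ev2: "eventually (\<lambda>n. real (card (Fu r n K u)) / Cb r n \<le> (\<Prod>i<r. d i * real (r*n) / real K + 2) / Cb r n) sequentially"
    using eventually_ge_at_top[of 2]
  proof eventually_elim
    case (elim n)
    have Cp: "Cb r n > 0" using Cb_pos[OF r1 elim] by simp
    have Np: "r * n > 0" using elim r by simp
    have "real (card (Fu r n K u)) \<le> real (\<Prod>i<r. card {v. v < r*n \<and> u i \<le> cell K (r*n) v \<and> cell K (r*n) v \<le> u (Suc i)})"
      using card_Fu[OF u, of n] by (simp only: of_nat_le_iff)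
    also have "\<dots> = (\<Prod>i<r. real (card {v. v < r*n \<and> u i \<le> cell K (r*n) v \<and> cell K (r*n) v \<le> u (Suc i)}))"
      by simp
    also have "\<dots> \<le> (\<Prod>i<r. d i * real (r*n) / real K + 2)"
    proof (rule prod_mono)
      fix i assume i: "i \<in> {..<r}"
      show "0 \<le> real (card {v. v < r*n \<and> u i \<le> cell K (r*n) v \<and> cell K (r*n) v \<le> u (Suc i)}) \<and>
            real (card {v. v < r*n \<and> u i \<le> cell K (r*n) v \<and> cell K (r*n) v \<le> u (Suc i)}) \<le> d i * real (r*n) / real K + 2"
        using card_J[OF K Np mono[of i]] i unfolding d_def by simp
    qed
    finally show ?case using Cp by (simp add: divide_right_mono)
  qed
  from ev1 ev2 show ?thesis by eventually_elim simp
qed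

theorem theorem2p1:
  fixes r :: nat
  assumes "r \<ge> 2"
  shows "\<forall>\<epsilon>>0. (\<lambda>n. measure_pmf.prob (pmf_of_set (matchings r n))
            {M. \<bar>real (z (rpartite_patterns r) M) / real n - fact (r - 1) / real r ^ (r - 1)\<bar> > \<epsilon>})
          \<longlonglongrightarrow> 0"
proof (intro allI impI)
  fix \<epsilon> :: real assume eps: "\<epsilon> > 0"
  have r: "r \<ge> 2" using assms .
  have r1: "r \<ge> 1" using r by simp
  define c where "c = fact r / real r ^ r"
  have cc: "fact (r - 1) / real r ^ (r - 1) = c"
  proof -
    obtain k where k: "r = Suc k" using r1 by (cases r) auto
    have "c = (real r * fact k) / (real r * real r ^ k)" unfolding c_def k by simp
    also have "\<dots> = fact k / real r ^ k" using r1 by simp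
    finally show ?thesis using k by simp
  qed
  have "(\<lambda>K. c * (1 + real r / real K) ^ r) \<longlonglongrightarrow> c * (1 + 0) ^ r"
    by (intro tendsto_intros)
  then have "eventually (\<lambda>K. c * (1 + real r / real K) ^ r < c + \<epsilon>/2) sequentially"
    using eps by (intro order_tendstoD(2)) auto
  then obtain K0 where K0: "\<And>K. K \<ge> K0 \<Longrightarrow> c * (1 + real r / real K) ^ r < c + \<epsilon>/2"
    by (auto simp: eventually_sequentially)
  define K where "K = max K0 1"
  have K1: "K \<ge> 1" unfolding K_def by simp
  have Kb: "c * (1 + real r / real K) ^ r < c + \<epsilon>/2" using K0[of K] unfolding K_def by simp
  have ev_u: "eventually (\<lambda>n. \<forall>u\<in>Kset r K. real (card (Fu r n K u)) / Cb r n < c + \<epsilon>/2) sequentially"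
    using u_bound[OF r K1 _ c_def Kb] by (intro eventually_ball_finite[OF Kset_finite]) auto
  have ev_l: "eventually (\<lambda>n. real n ^ r / Cb r n > c - \<epsilon>/2) sequentially"
    using lim_K2[OF r1] eps unfolding c_def[symmetric] by (intro order_tendstoD(1)) auto
  define B where "B n = (1 + real (card (Kset r K))) * (Wn r n / (\<epsilon> * real n / 2)^2)" for n
  have B0: "B \<longlonglongrightarrow> 0"
  proof -
    have "(\<lambda>n. (1 + real (card (Kset r K))) * (4 / \<epsilon>^2) * (Wn r n / real n ^ 2)) \<longlonglongrightarrow>
          (1 + real (card (Kset r K))) * (4 / \<epsilon>^2) * 0"
      by (intro tendsto_intros lim_K1[OF r1])
    moreover have "eventually (\<lambda>n. (1 + real (card (Kset r K))) * (4 / \<epsilon>^2) * (Wn r n / real n ^ 2) = B n) sequentially"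
      using eventually_gt_at_top[of 0]
    proof eventually_elim
      case (elim n)
      then have "real n > 0" by simp
      then show ?case unfolding B_def using eps by (simp add: field_simps power2_eq_square)
    qed
    ultimately show ?thesis by (auto intro: Lim_transform_eventually)
  qed
  show "(\<lambda>n. measure_pmf.prob (pmf_of_set (matchings r n))
            {M. \<bar>real (z (rpartite_patterns r) M) / real n - fact (r - 1) / real r ^ (r - 1)\<bar> > \<epsilon>})
          \<longlonglongrightarrow> 0"
    unfolding cc
  proof (rule tendsto_sandwich[of "\<lambda>_. 0" _ _ B])
    show "eventually (\<lambda>n. 0 \<le> measure_pmf.prob (pmf_of_set (matchings r n))
            {M. \<bar>real (z (rpartite_patterns r) M) / real n - c\<bar> > \<epsilon>}) sequentially"
      by simp
    show "eventually (\<lambda>n. measure_pmf.prob (pmf_of_set (matchings r n))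
            {M. \<bar>real (z (rpartite_patterns r) M) / real n - c\<bar> > \<epsilon>} \<le> B n) sequentially"
      using ev_u ev_l eventually_ge_at_top[of 2]
    proof eventually_elim
      case (elim n)
      then show ?case unfolding B_def using prob_bound[OF r elim(3) eps elim(1) elim(2)] by simp
    qed
    show "((\<lambda>_. 0) \<longlongrightarrow> (0::real)) sequentially" by simp
    show "(B \<longlongrightarrow> 0) sequentially" by (rule B0)
  qed
qed


end
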